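(* Let $A$ be a simple linear arrangement of $n$ hyperplanes in $\mathbb{R}^d$ with corresponding $d$-maximum class $C\subseteq\{0,1\}^n$, and let $h$ be a generic hyperplane. Then the arrangement induced by $A$ on $h$ corresponds to a $(d-1)$-maximum class $C'\subseteq C$. Moreover, if all $d$-intersection points of $A$ lie on one side of $h$, then every $(d-1)$-cube of $C'$ lies in $\partial C$; and $\partial C$ is the disjoint union of (the $(d-1)$-cubes of) two $(d-1)$-maximum sub-classes of $C$.
   Context: A simple linear arrangement is a collection of $n\ge d$ oriented affine hyperplanes in $\mathbb{R}^d$ in general position: any $k<d$ of them meet in a plane of dimension $d-k$, any $d$ meet in a single point (a $d$-intersection point), and any $d+1$ have empty intersection. Each cell (connected component of the complement) gives a concept in $\{0,1\}^n$ whose $i$-th coordinate records the side of the $i$-th hyperplane containing the cell; the class corresponding to the arrangement is the set of these concepts. A generic hyperplane $h$ is one such that $A\cup\{h\}$ is in general position; the arrangement induced on $h\cong\mathbb{R}^{d-1}$ consists of the $n$ hyperplanes $H_i\cap h$, and its class in $\{0,1\}^n$ is defined in the same way. $C\subseteq\{0,1\}^n$ is $k$-maximum if its VC-dimension is $k$ and $|C|=\sum_{i=0}^k\binom{n}{i}$. A $k$-cube in $C$ is a set of $2^k$ points of $C$ agreeing outside some $k$ coordinates and taking all values on them. The boundary $\partial C$ of a $d$-maximum class is the set of $(d-1)$-cubes of $C$ that are faces of exactly one $d$-cube of $C$. *)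

theory Defs
  imports "HOL-Analysis.Analysis"
begin

text \<open>An oriented affine hyperplane in a Euclidean space is given by a pair (a, b)
  with a nonzero normal a; it is the set {x. a \<bullet> x = b}; its positive side is
  {x. a \<bullet> x > b} (coordinate 1) and its negative side {x. a \<bullet> x < b} (coordinate 0).
  Concepts in {0,1}^n are represented as subsets of {..<n} (the coordinates equal to 1).\<close>

type_synonym 'a ohp = "'a \<times> real"

definition hp :: "'a::euclidean_space ohp \<Rightarrow> 'a set" where
  "hp H = {x. fst H \<bullet> x = snd H}"

definition pos_side :: "'a::euclidean_space ohp \<Rightarrow> 'a set" where
  "pos_side H = {x. fst H \<bullet> x > snd H}"

definition neg_side :: "'a::euclidean_space ohp \<Rightarrow> 'a set" where
  "neg_side H = {x. fst H \<bullet> x < snd H}"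

definition simple_arrangement :: "nat \<Rightarrow> (nat \<Rightarrow> 'a::euclidean_space ohp) \<Rightarrow> bool" where
  "simple_arrangement n H \<longleftrightarrow>
     n \<ge> DIM('a) \<and>
     (\<forall>i<n. fst (H i) \<noteq> 0) \<and>
     (\<forall>K. K \<subseteq> {..<n} \<and> card K \<le> DIM('a) \<longrightarrow>
          aff_dim (\<Inter>i\<in>K. hp (H i)) = int DIM('a) - int (card K)) \<and>
     (\<forall>K. K \<subseteq> {..<n} \<and> card K = DIM('a) + 1 \<longrightarrow> (\<Inter>i\<in>K. hp (H i)) = {})"

definition generic_hyperplane :: "nat \<Rightarrow> (nat \<Rightarrow> 'a::euclidean_space ohp) \<Rightarrow> 'a ohp \<Rightarrow> bool" where
  "generic_hyperplane n H h \<longleftrightarrow> fst h \<noteq> 0 \<and>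
     (\<forall>K. K \<subseteq> {..<Suc n} \<and> card K \<le> DIM('a) \<longrightarrow>
          aff_dim (\<Inter>i\<in>K. hp ((H(n := h)) i)) = int DIM('a) - int (card K)) \<and>
     (\<forall>K. K \<subseteq> {..<Suc n} \<and> card K = DIM('a) + 1 \<longrightarrow> (\<Inter>i\<in>K. hp ((H(n := h)) i)) = {})"

definition concept_of :: "nat \<Rightarrow> (nat \<Rightarrow> 'a::euclidean_space ohp) \<Rightarrow> 'a set \<Rightarrow> nat set" where
  "concept_of n H c = {i. i < n \<and> c \<subseteq> pos_side (H i)}"

definition arr_class :: "nat \<Rightarrow> (nat \<Rightarrow> 'a::euclidean_space ohp) \<Rightarrow> nat set set" where
  "arr_class n H = concept_of n H ` components (UNIV - (\<Union>i<n. hp (H i)))"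

text \<open>Class of the arrangement induced on h: cells are the connected components of
  h minus the hyperplanes H i (i.e. of h \<cong> R^(d-1) minus the hyperplanes H i \<inter> h).\<close>
definition induced_class :: "nat \<Rightarrow> (nat \<Rightarrow> 'a::euclidean_space ohp) \<Rightarrow> 'a ohp \<Rightarrow> nat set set" where
  "induced_class n H h = concept_of n H ` components (hp h - (\<Union>i<n. hp (H i)))"

definition shatters :: "nat set set \<Rightarrow> nat set \<Rightarrow> bool" where
  "shatters C S \<longleftrightarrow> (\<lambda>c. c \<inter> S) ` C = Pow S"

definition maximum_class :: "nat \<Rightarrow> nat \<Rightarrow> nat set set \<Rightarrow> bool" where
  "maximum_class n k C \<longleftrightarrow> C \<subseteq> Pow {..<n} \<and>
     (\<exists>S. S \<subseteq> {..<n} \<and> card S = k \<and> shatters C S) \<and>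
     (\<forall>S. S \<subseteq> {..<n} \<and> shatters C S \<longrightarrow> card S \<le> k) \<and>
     card C = (\<Sum>i\<le>k. n choose i)"

definition is_cube :: "nat \<Rightarrow> nat \<Rightarrow> nat set set \<Rightarrow> bool" where
  "is_cube n k Q \<longleftrightarrow> (\<exists>K b. K \<subseteq> {..<n} \<and> card K = k \<and> b \<subseteq> {..<n} \<and>
       Q = {(b - K) \<union> T | T. T \<subseteq> K})"

definition cubes :: "nat \<Rightarrow> nat \<Rightarrow> nat set set \<Rightarrow> nat set set set" where
  "cubes n k C = {Q. is_cube n k Q \<and> Q \<subseteq> C}"

text \<open>Boundary of a d-maximum class: (d-1)-cubes of C that are faces of exactly one d-cube of C
  (a (d-1)-cube contained in a d-cube is one of its faces).\<close>
definition boundary :: "nat \<Rightarrow> nat \<Rightarrow> nat set set \<Rightarrow> nat set set set" where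
  "boundary n d C = {Q \<in> cubes n (d - 1) C. card {P \<in> cubes n d C. Q \<subseteq> P} = 1}"

end

theory Submission
  imports Defs
begin



definition fl :: "(nat \<Rightarrow> 'a::euclidean_space ohp) \<Rightarrow> nat set \<Rightarrow> 'a set" where
  "fl G K = (\<Inter>i\<in>K. hp (G i))"

definition sok :: "(nat \<Rightarrow> 'a::euclidean_space ohp) \<Rightarrow> nat set \<Rightarrow> nat set \<Rightarrow> 'a \<Rightarrow> bool" where
  "sok G c I x \<longleftrightarrow> (\<forall>i\<in>I. (i \<in> c \<longrightarrow> fst (G i) \<bullet> x > snd (G i)) \<and> (i \<notin> c \<longrightarrow> fst (G i) \<bullet> x < snd (G i)))"

definition sv :: "'a::euclidean_space set \<Rightarrow> nat set \<Rightarrow> (nat \<Rightarrow> 'a ohp) \<Rightarrow> nat set set" where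
  "sv S I G = {c. c \<subseteq> I \<and> (\<exists>x\<in>S. sok G c I x)}"

definition gp :: "'a::euclidean_space set \<Rightarrow> nat set \<Rightarrow> (nat \<Rightarrow> 'a ohp) \<Rightarrow> nat \<Rightarrow> bool" where
  "gp S I G k \<longleftrightarrow> (\<forall>J. J \<subseteq> I \<and> card J \<le> k \<longrightarrow> aff_dim (S \<inter> fl G J) = int k - int (card J)) \<and>
     (\<forall>J. J \<subseteq> I \<and> card J = Suc k \<longrightarrow> S \<inter> fl G J = {})"

lemma affine_fl: "affine (fl G K)"
  unfolding fl_def hp_def by (intro affine_Inter) (auto intro: affine_hyperplane)

lemma mem_fl: "x \<in> fl G K \<longleftrightarrow> (\<forall>i\<in>K. fst (G i) \<bullet> x = snd (G i))"
  by (auto simp: fl_def hp_def)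

lemma fl_insert: "fl G (insert j K) = hp (G j) \<inter> fl G K"
  by (auto simp: fl_def)

lemma sign_of_point:
  "sok G {i\<in>I. fst (G i) \<bullet> x > snd (G i)} I x \<longleftrightarrow> (\<forall>i\<in>I. x \<notin> hp (G i))"
  by (auto simp: sok_def hp_def)

lemma components_sv:
  assumes "finite I"
  shows "(\<lambda>c. {i\<in>I. c \<subseteq> pos_side (G i)}) ` components (S - (\<Union>i\<in>I. hp (G i))) = sv S I G"
proof -
  let ?U = "S - (\<Union>i\<in>I. hp (G i))"
  have key: "{i\<in>I. connected_component_set ?U x \<subseteq> pos_side (G i)} = {i\<in>I. fst (G i) \<bullet> x > snd (G i)}"
    if x: "x \<in> ?U" for x
  proof -
    let ?c = "connected_component_set ?U x"
    have xc: "x \<in> ?c" using x by simp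
    have cU: "?c \<subseteq> ?U" by (rule connected_component_subset)
    have "?c \<subseteq> pos_side (G i) \<longleftrightarrow> fst (G i) \<bullet> x > snd (G i)" if i: "i \<in> I" for i
    proof
      assume "?c \<subseteq> pos_side (G i)" then show "fst (G i) \<bullet> x > snd (G i)"
        using xc unfolding pos_side_def by blast
    next
      assume xp: "fst (G i) \<bullet> x > snd (G i)"
      have sub: "?c \<subseteq> pos_side (G i) \<union> neg_side (G i)"
      proof
        fix y assume y: "y \<in> ?c"
        then have "y \<notin> hp (G i)" using cU i by blast
        then show "y \<in> pos_side (G i) \<union> neg_side (G i)"
          by (auto simp: pos_side_def neg_side_def hp_def)
      qed
      have "pos_side (G i) \<inter> ?c = {} \<or> neg_side (G i) \<inter> ?c = {}"
        apply (rule connectedD[OF connected_connected_component])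
        using sub by (auto simp: pos_side_def neg_side_def open_halfspace_lt open_halfspace_gt)
      moreover have "x \<in> pos_side (G i)" using xp by (simp add: pos_side_def)
      ultimately have "neg_side (G i) \<inter> ?c = {}" using xc by auto
      show "?c \<subseteq> pos_side (G i)"
      proof
        fix y assume y: "y \<in> ?c"
        then have "y \<notin> hp (G i)" using cU i by blast
        moreover have "y \<notin> neg_side (G i)" using y \<open>neg_side (G i) \<inter> ?c = {}\<close> by blast
        ultimately show "y \<in> pos_side (G i)" by (auto simp: pos_side_def neg_side_def hp_def)
      qed
    qed
    then show ?thesis by auto
  qed
  show ?thesis
  proof (intro equalityI subsetI)
    fix c assume "c \<in> (\<lambda>c. {i\<in>I. c \<subseteq> pos_side (G i)}) ` components ?U"
    then obtain x where x: "x \<in> ?U" and c: "c = {i\<in>I. connected_component_set ?U x \<subseteq> pos_side (G i)}"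
      by (auto simp: components_iff)
    then have "c = {i\<in>I. fst (G i) \<bullet> x > snd (G i)}" using key by auto
    moreover have "sok G {i\<in>I. fst (G i) \<bullet> x > snd (G i)} I x"
      using x by (subst sign_of_point) auto
    ultimately show "c \<in> sv S I G" using x by (auto simp: sv_def)
  next
    fix c assume "c \<in> sv S I G"
    then obtain x where c: "c \<subseteq> I" and x: "x \<in> S" and s: "sok G c I x" by (auto simp: sv_def)
    have xU: "x \<in> ?U" using x s by (force simp: sok_def hp_def)
    have "c = {i\<in>I. fst (G i) \<bullet> x > snd (G i)}" using c s by (force simp: sok_def)
    then have "c = {i\<in>I. connected_component_set ?U x \<subseteq> pos_side (G i)}" using key[OF xU] by simp
    then show "c \<in> (\<lambda>c. {i\<in>I. c \<subseteq> pos_side (G i)}) ` components ?U"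
    proof (rule image_eqI)
      show "connected_component_set ?U x \<in> components ?U" using xU by (auto simp: components_iff)
    qed
  qed
qed


lemma sok_insert:
  "sok G c (insert j I) x \<longleftrightarrow> sok G c I x \<and> (j \<in> c \<longrightarrow> fst (G j) \<bullet> x > snd (G j)) \<and> (j \<notin> c \<longrightarrow> fst (G j) \<bullet> x < snd (G j))"
  by (auto simp: sok_def)

lemma sok_insert_other: "j \<notin> I \<Longrightarrow> sok G (insert j c) I x \<longleftrightarrow> sok G c I x"
  by (auto simp: sok_def)

lemma sok_minus_other: "j \<notin> I \<Longrightarrow> sok G (c - {j}) I x \<longleftrightarrow> sok G c I x"
  by (auto simp: sok_def)

lemma perturb:
  fixes x z :: "'a::euclidean_space"
  assumes "finite I" "\<forall>i\<in>I. fst (G i) \<bullet> x \<noteq> snd (G i)"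
  shows "\<exists>t>0. \<forall>i\<in>I. (fst (G i) \<bullet> (x + t *\<^sub>R (z - x)) - snd (G i)) * (fst (G i) \<bullet> x - snd (G i)) > 0"
proof -
  have "\<forall>i\<in>I. eventually (\<lambda>t. (fst (G i) \<bullet> (x + t *\<^sub>R (z - x)) - snd (G i)) * (fst (G i) \<bullet> x - snd (G i)) > 0) (at_right (0::real))"
  proof
    fix i assume i: "i \<in> I"
    let ?g = "fst (G i) \<bullet> x - snd (G i)"
    have e: "(fst (G i) \<bullet> (x + t *\<^sub>R (z - x)) - snd (G i)) = ?g + t * (fst (G i) \<bullet> (z - x))" for t
      by (simp add: inner_add_right algebra_simps)
    have lim: "((\<lambda>t. ?g + t * (fst (G i) \<bullet> (z - x))) \<longlongrightarrow> ?g + 0 * (fst (G i) \<bullet> (z - x))) (at_right (0::real))"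
      by (intro tendsto_intros)
    have ne: "?g \<noteq> 0" using assms(2) i by auto
    show "eventually (\<lambda>t. (fst (G i) \<bullet> (x + t *\<^sub>R (z - x)) - snd (G i)) * ?g > 0) (at_right (0::real))"
    proof (cases "?g > 0")
      case True
      have "eventually (\<lambda>t. ?g + t * (fst (G i) \<bullet> (z - x)) > 0) (at_right (0::real))"
        using order_tendstoD(1)[OF lim] True by simp
      then show ?thesis by eventually_elim (use True in \<open>simp add: e\<close>)
    next
      case False
      then have F: "?g < 0" using ne by linarith
      have "eventually (\<lambda>t. ?g + t * (fst (G i) \<bullet> (z - x)) < 0) (at_right (0::real))"
        using order_tendstoD(2)[OF lim] F by simp
      then show ?thesis by eventually_elim (use F in \<open>simp add: e mult_neg_neg\<close>)
    qed
  qed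
  then have "eventually (\<lambda>t. \<forall>i\<in>I. (fst (G i) \<bullet> (x + t *\<^sub>R (z - x)) - snd (G i)) * (fst (G i) \<bullet> x - snd (G i)) > 0) (at_right (0::real))"
    using assms(1) by (simp add: eventually_ball_finite)
  then obtain b where b: "b > 0" "\<And>t. t > 0 \<Longrightarrow> t < b \<Longrightarrow> \<forall>i\<in>I. (fst (G i) \<bullet> (x + t *\<^sub>R (z - x)) - snd (G i)) * (fst (G i) \<bullet> x - snd (G i)) > 0"
    by (auto simp: eventually_at_right_field)
  show ?thesis using b(1) b(2)[of "b/2"] by (intro exI[of _ "b/2"]) auto
qed

lemma sok_strict: "sok G c I x \<Longrightarrow> \<forall>i\<in>I. fst (G i) \<bullet> x \<noteq> snd (G i)"
  by (force simp: sok_def)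

lemma sok_perturb:
  assumes "finite I" "sok G c I x" "\<forall>i\<in>I. (fst (G i) \<bullet> y - snd (G i)) * (fst (G i) \<bullet> x - snd (G i)) > 0"
  shows "sok G c I y"
  unfolding sok_def
proof
  fix i assume i: "i \<in> I"
  have p: "(fst (G i) \<bullet> y - snd (G i)) * (fst (G i) \<bullet> x - snd (G i)) > 0" using assms(3) i by auto
  show "(i \<in> c \<longrightarrow> snd (G i) < fst (G i) \<bullet> y) \<and> (i \<notin> c \<longrightarrow> fst (G i) \<bullet> y < snd (G i))"
    using assms(2) i p unfolding sok_def by (auto simp: zero_less_mult_iff)
qed

lemma move_off:
  fixes x z :: "'a::euclidean_space"
  assumes S: "affine S" "x \<in> S" "z \<in> S" and fin: "finite I" and s: "sok G c I x"
    and zj: "fst (G j) \<bullet> z \<noteq> snd (G j)" and xj: "fst (G j) \<bullet> x = snd (G j)"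
  shows "\<exists>y\<in>S. sok G c I y \<and> fst (G j) \<bullet> y > snd (G j)" "\<exists>y\<in>S. sok G c I y \<and> fst (G j) \<bullet> y < snd (G j)"
proof -
  have aux: "\<exists>y\<in>S. sok G c I y \<and> (fst (G j) \<bullet> y - snd (G j)) * (fst (G j) \<bullet> z' - snd (G j)) > 0"
    if z': "z' \<in> S" "fst (G j) \<bullet> z' \<noteq> snd (G j)" for z'
  proof -
    obtain t where t: "t > 0" "\<forall>i\<in>I. (fst (G i) \<bullet> (x + t *\<^sub>R (z' - x)) - snd (G i)) * (fst (G i) \<bullet> x - snd (G i)) > 0"
      using perturb[OF fin sok_strict[OF s], of z'] by blast
    let ?y = "x + t *\<^sub>R (z' - x)"
    have yS: "?y \<in> S" using mem_affine_3_minus[OF S(1) S(2) z'(1) S(2), of t] .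
    have "fst (G j) \<bullet> ?y - snd (G j) = t * (fst (G j) \<bullet> z' - snd (G j))"
      using xj by (simp add: inner_add_right inner_diff_right algebra_simps)
    then have "(fst (G j) \<bullet> ?y - snd (G j)) * (fst (G j) \<bullet> z' - snd (G j)) > 0"
      using t(1) z'(2) by (simp add: mult.assoc zero_less_mult_iff) linarith
    then show ?thesis using yS sok_perturb[OF fin s t(2)] by blast
  qed
  let ?z2 = "x + (-1) *\<^sub>R (z - x)"
  have z2S: "?z2 \<in> S" using mem_affine_3_minus[OF S(1) S(2) S(3) S(2), of "-1"] .
  have z2: "fst (G j) \<bullet> ?z2 - snd (G j) = - (fst (G j) \<bullet> z - snd (G j))"
    using xj by (simp add: inner_add_right inner_diff_right algebra_simps)
  show "\<exists>y\<in>S. sok G c I y \<and> fst (G j) \<bullet> y > snd (G j)"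
  proof (cases "fst (G j) \<bullet> z > snd (G j)")
    case True
    then show ?thesis using aux[OF S(3) zj] by (auto simp: zero_less_mult_iff)
  next
    case False
    then have "fst (G j) \<bullet> ?z2 > snd (G j)" using z2 zj by linarith
    then show ?thesis using aux[OF z2S] by (auto simp: zero_less_mult_iff)
  qed
  show "\<exists>y\<in>S. sok G c I y \<and> fst (G j) \<bullet> y < snd (G j)"
  proof (cases "fst (G j) \<bullet> z < snd (G j)")
    case True
    then show ?thesis using aux[OF S(3) zj] by (auto simp: zero_less_mult_iff)
  next
    case False
    then have "fst (G j) \<bullet> ?z2 < snd (G j)" using z2 zj by linarith
    then show ?thesis using aux[OF z2S] by (auto simp: zero_less_mult_iff)
  qed
qed

lemma cross_point:
  fixes x1 x2 :: "'a::euclidean_space"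
  assumes S: "convex S" "x1 \<in> S" "x2 \<in> S" and s1: "sok G c I x1" and s2: "sok G c I x2"
    and L1: "\<forall>l\<in>L. fst (G l) \<bullet> x1 = snd (G l)" and L2: "\<forall>l\<in>L. fst (G l) \<bullet> x2 = snd (G l)"
    and j1: "fst (G j) \<bullet> x1 < snd (G j)" and j2: "fst (G j) \<bullet> x2 > snd (G j)"
  shows "\<exists>y\<in>S. sok G c I y \<and> (\<forall>l\<in>insert j L. fst (G l) \<bullet> y = snd (G l))"
proof -
  define f1 where "f1 = fst (G j) \<bullet> x1 - snd (G j)"
  define f2 where "f2 = fst (G j) \<bullet> x2 - snd (G j)"
  have f1: "f1 < 0" and f2: "f2 > 0" using j1 j2 by (auto simp: f1_def f2_def)
  define t where "t = f1 / (f1 - f2)"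
  have t0: "0 < t" and t1: "t < 1" using f1 f2 by (auto simp: t_def divide_simps)
  define y where "y = (1 - t) *\<^sub>R x1 + t *\<^sub>R x2"
  have yS: "y \<in> S" unfolding y_def using S t0 t1 by (intro convexD) auto
  have lin: "fst (G i) \<bullet> y - snd (G i) = (1 - t) * (fst (G i) \<bullet> x1 - snd (G i)) + t * (fst (G i) \<bullet> x2 - snd (G i))" for i
    by (simp add: y_def inner_add_right algebra_simps)
  have "fst (G j) \<bullet> y - snd (G j) = 0"
    unfolding lin f1_def[symmetric] f2_def[symmetric] using f1 f2 by (simp add: t_def field_simps)
  moreover have "fst (G l) \<bullet> y = snd (G l)" if "l \<in> L" for l
    using lin[of l] L1 L2 that by auto
  moreover have "sok G c I y"
    unfolding sok_def
  proof
    fix i assume i: "i \<in> I"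
    have "(i \<in> c \<longrightarrow> 0 < fst (G i) \<bullet> y - snd (G i)) \<and> (i \<notin> c \<longrightarrow> fst (G i) \<bullet> y - snd (G i) < 0)"
      unfolding lin using s1 s2 i t0 t1 unfolding sok_def
      by (auto intro!: add_pos_pos add_neg_neg mult_pos_pos mult_pos_neg)
    then show "(i \<in> c \<longrightarrow> snd (G i) < fst (G i) \<bullet> y) \<and> (i \<notin> c \<longrightarrow> fst (G i) \<bullet> y < snd (G i))"
      by auto
  qed
  ultimately show ?thesis using yS by auto
qed


lemma finite_sv: "finite I \<Longrightarrow> finite (sv S I G)"
  by (rule finite_subset[of _ "Pow I"]) (auto simp: sv_def)

lemma sv_rec:
  fixes S :: "'a::euclidean_space set"
  assumes S: "affine S" and fin: "finite I0" and j: "j \<notin> I0" and nsub: "\<not> S \<subseteq> hp (G j)"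
  shows "card (sv S (insert j I0) G) = card (sv S I0 G) + card (sv (S \<inter> hp (G j)) I0 G)"
proof -
  let ?I = "insert j I0"
  define X where "X = {c\<in>sv S I0 G. c \<in> sv S ?I G}"
  define Y where "Y = {c\<in>sv S I0 G. insert j c \<in> sv S ?I G}"
  obtain z where zS: "z \<in> S" and zj: "fst (G j) \<bullet> z \<noteq> snd (G j)" using nsub by (auto simp: hp_def)
  have finX: "finite X" unfolding X_def by (rule finite_subset[OF _ finite_sv[OF fin]]) auto
  have finY: "finite Y" unfolding Y_def by (rule finite_subset[OF _ finite_sv[OF fin]]) auto
  have XY: "X \<union> Y = sv S I0 G"
  proof (intro equalityI subsetI)
    fix c assume "c \<in> X \<union> Y" then show "c \<in> sv S I0 G" by (auto simp: X_def Y_def)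
  next
    fix c assume c: "c \<in> sv S I0 G"
    then obtain x where cI: "c \<subseteq> I0" and x: "x \<in> S" "sok G c I0 x" by (auto simp: sv_def)
    obtain y where y: "y \<in> S" "sok G c I0 y" "fst (G j) \<bullet> y \<noteq> snd (G j)"
    proof (cases "fst (G j) \<bullet> x = snd (G j)")
      case True
      then show ?thesis using move_off(1)[OF S x(1) zS fin x(2) zj True] that by force
    next
      case False then show ?thesis using that x by blast
    qed
    show "c \<in> X \<union> Y"
    proof (cases "fst (G j) \<bullet> y > snd (G j)")
      case True
      then have "sok G (insert j c) ?I y" using y j by (simp add: sok_insert sok_insert_other)
      then have "c \<in> Y" using c cI y(1) by (auto simp: Y_def sv_def)
      then show ?thesis by blast
    next
      case False
      then have "fst (G j) \<bullet> y < snd (G j)" using y(3) by linarith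
      then have "sok G c ?I y" using y j cI by (auto simp: sok_insert)
      then have "c \<in> X" using c cI y(1) by (auto simp: X_def sv_def)
      then show ?thesis by blast
    qed
  qed
  have XiY: "X \<inter> Y = sv (S \<inter> hp (G j)) I0 G"
  proof (intro equalityI subsetI)
    fix c assume c: "c \<in> X \<inter> Y"
    then obtain x1 x2 where cI: "c \<subseteq> I0" and x1: "x1 \<in> S" "sok G c ?I x1" and x2: "x2 \<in> S" "sok G (insert j c) ?I x2"
      by (auto simp: X_def Y_def sv_def)
    have jc: "j \<notin> c" using cI j by auto
    have s1: "sok G c I0 x1" "fst (G j) \<bullet> x1 < snd (G j)" using x1(2) jc by (auto simp: sok_insert)
    have s2: "sok G c I0 x2" "fst (G j) \<bullet> x2 > snd (G j)" using x2(2) j by (auto simp: sok_insert sok_insert_other)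
    obtain y where "y \<in> S" "sok G c I0 y" "fst (G j) \<bullet> y = snd (G j)"
      using cross_point[OF affine_imp_convex[OF S] x1(1) x2(1) s1(1) s2(1), of "{}" j] s1(2) s2(2) by auto
    then show "c \<in> sv (S \<inter> hp (G j)) I0 G" using cI by (auto simp: sv_def hp_def)
  next
    fix c assume c: "c \<in> sv (S \<inter> hp (G j)) I0 G"
    then obtain x where cI: "c \<subseteq> I0" and x: "x \<in> S" "fst (G j) \<bullet> x = snd (G j)" "sok G c I0 x"
      by (auto simp: sv_def hp_def)
    obtain y1 where y1: "y1 \<in> S" "sok G c I0 y1" "fst (G j) \<bullet> y1 > snd (G j)"
      using move_off(1)[OF S x(1) zS fin x(3) zj x(2)] by blast
    obtain y2 where y2: "y2 \<in> S" "sok G c I0 y2" "fst (G j) \<bullet> y2 < snd (G j)"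
      using move_off(2)[OF S x(1) zS fin x(3) zj x(2)] by blast
    have jc: "j \<notin> c" using cI j by auto
    have "sok G c ?I y2" using y2 jc by (auto simp: sok_insert)
    moreover have "sok G (insert j c) ?I y1" using y1 j by (simp add: sok_insert sok_insert_other)
    moreover have "c \<in> sv S I0 G" using cI x by (auto simp: sv_def)
    ultimately show "c \<in> X \<inter> Y" using cI y1(1) y2(1) by (auto simp: X_def Y_def sv_def)
  qed
  have split: "sv S ?I G = X \<union> insert j ` Y"
  proof (intro equalityI subsetI)
    fix c assume c: "c \<in> sv S ?I G"
    then obtain x where cI: "c \<subseteq> ?I" and x: "x \<in> S" "sok G c ?I x" by (auto simp: sv_def)
    show "c \<in> X \<union> insert j ` Y"
    proof (cases "j \<in> c")
      case True
      have "c - {j} \<in> sv S I0 G" using cI x j by (auto simp: sv_def sok_insert sok_minus_other)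
      moreover have "insert j (c - {j}) = c" using True by auto
      ultimately have "c - {j} \<in> Y" using c by (auto simp: Y_def)
      then show ?thesis using True by (auto intro!: image_eqI[of _ _ "c - {j}"])
    next
      case False
      then have "c \<in> sv S I0 G" using cI x by (auto simp: sv_def sok_insert)
      then show ?thesis using c by (auto simp: X_def)
    qed
  next
    fix c assume "c \<in> X \<union> insert j ` Y" then show "c \<in> sv S ?I G" by (auto simp: X_def Y_def)
  qed
  have disj: "X \<inter> insert j ` Y = {}" using j by (auto simp: X_def sv_def)
  have inj: "inj_on (insert j) Y"
  proof (rule inj_onI)
    fix c1 c2 assume "c1 \<in> Y" "c2 \<in> Y" "insert j c1 = insert j c2"
    moreover have "j \<notin> c1" "j \<notin> c2" using \<open>c1 \<in> Y\<close> \<open>c2 \<in> Y\<close> j by (auto simp: Y_def sv_def)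
    ultimately show "c1 = c2" by (metis Diff_insert_absorb)
  qed
  have "card (sv S ?I G) = card X + card Y"
    unfolding split using card_Un_disjoint[OF finX finite_imageI[OF finY] disj] card_image[OF inj] by simp
  also have "\<dots> = card (X \<union> Y) + card (X \<inter> Y)" using card_Un_Int[OF finX finY] .
  finally show ?thesis using XY XiY by simp
qed

lemma gpD1: "gp S I G k \<Longrightarrow> J \<subseteq> I \<Longrightarrow> card J \<le> k \<Longrightarrow> aff_dim (S \<inter> fl G J) = int k - int (card J)"
  unfolding gp_def by blast

lemma gpD2: "gp S I G k \<Longrightarrow> J \<subseteq> I \<Longrightarrow> card J = Suc k \<Longrightarrow> S \<inter> fl G J = {}"
  unfolding gp_def by blast

lemma gp_affdim: "gp S I G k \<Longrightarrow> aff_dim S = int k"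
  using gpD1[of S I G k "{}"] by (simp add: fl_def)

lemma gp_mono: "gp S I G k \<Longrightarrow> I0 \<subseteq> I \<Longrightarrow> gp S I0 G k"
  unfolding gp_def by blast

lemma fl_empty[simp]: "fl G {} = UNIV" by (simp add: fl_def)

lemma binom_sum_Suc:
  "(\<Sum>i\<le>Suc k. Suc m choose i) = (\<Sum>i\<le>Suc k. m choose i) + (\<Sum>i\<le>k. m choose i)"
  by (induction k) (simp_all add: sum.atMost_Suc)

lemma binom_sum_zero: "(\<Sum>i\<le>k. (0::nat) choose i) = 1"
  by (induction k) (simp_all add: sum.atMost_Suc)

lemma count_sv:
  fixes G :: "nat \<Rightarrow> 'a::euclidean_space ohp"
  assumes "finite I"
  shows "affine S \<Longrightarrow> gp S I G k \<Longrightarrow> card (sv S I G) = (\<Sum>i\<le>k. card I choose i)"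
  using assms
proof (induction I arbitrary: S k rule: finite_induct)
  case empty
  have "aff_dim S = int k" using gp_affdim[OF empty(2)] .
  then have "S \<noteq> {}" by auto
  then have "sv S {} G = {{}}" by (auto simp: sv_def sok_def)
  then show ?case by (simp add: binom_sum_zero)
next
  case (insert j I0)
  have gpS: "aff_dim S = int k" using gp_affdim[OF insert(5)] .
  have gp0: "gp S I0 G k" using gp_mono[OF insert(5)] by auto
  have IH0: "card (sv S I0 G) = (\<Sum>i\<le>k. card I0 choose i)" using insert(3)[OF insert(4) gp0] .
  have flj: "S \<inter> fl G {j} = S \<inter> hp (G j)" by (simp add: fl_def)
  show ?case
  proof (cases k)
    case 0
    have e: "S \<inter> hp (G j) = {}" using gpD2[OF insert(5), of "{j}"] 0 flj by simp
    have "S \<noteq> {}" using gpS by auto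
    then have ns: "\<not> S \<subseteq> hp (G j)" using e by auto
    have "card (sv (S \<inter> hp (G j)) I0 G) = 0" using e by (simp add: sv_def)
    then show ?thesis using sv_rec[of S I0 j G, OF insert(4) insert(1) insert(2) ns] IH0 0 by simp
  next
    case (Suc k')
    have a1: "aff_dim (S \<inter> hp (G j)) = int k - 1" using gpD1[OF insert(5), of "{j}"] Suc flj by simp
    have ns: "\<not> S \<subseteq> hp (G j)"
    proof
      assume "S \<subseteq> hp (G j)" then have "S \<inter> hp (G j) = S" by blast
      then show False using a1 gpS by simp
    qed
    have gpj: "gp (S \<inter> hp (G j)) I0 G k'"
      unfolding gp_def
    proof (intro conjI allI impI)
      fix J assume J: "J \<subseteq> I0 \<and> card J \<le> k'"
      have fJ: "finite J" using J insert(1) finite_subset by blast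
      have jJ: "j \<notin> J" using J insert(2) by auto
      have "aff_dim (S \<inter> fl G (insert j J)) = int k - int (card (insert j J))"
        using gpD1[OF insert(5), of "insert j J"] J Suc fJ jJ by auto
      then show "aff_dim (S \<inter> hp (G j) \<inter> fl G J) = int k' - int (card J)"
        using Suc fJ jJ by (simp add: fl_insert Int_assoc)
    next
      fix J assume J: "J \<subseteq> I0 \<and> card J = Suc k'"
      have fJ: "finite J" using J insert(1) finite_subset by blast
      have jJ: "j \<notin> J" using J insert(2) by auto
      have "S \<inter> fl G (insert j J) = {}"
        using gpD2[OF insert(5), of "insert j J"] J Suc fJ jJ by auto
      then show "S \<inter> hp (G j) \<inter> fl G J = {}" by (simp add: fl_insert Int_assoc)
    qed
    have aj: "affine (S \<inter> hp (G j))" using insert(4) by (auto simp: hp_def intro: affine_hyperplane)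
    have IH1: "card (sv (S \<inter> hp (G j)) I0 G) = (\<Sum>i\<le>k'. card I0 choose i)" using insert(3)[OF aj gpj] .
    have cI: "card (insert j I0) = Suc (card I0)" using insert(1,2) by simp
    have "card (sv S (insert j I0) G) = (\<Sum>i\<le>Suc k'. card I0 choose i) + (\<Sum>i\<le>k'. card I0 choose i)"
      using sv_rec[of S I0 j G, OF insert(4) insert(1) insert(2) ns] IH0 IH1 Suc by (simp del: sum.atMost_Suc)
    then show ?thesis unfolding cI Suc binom_sum_Suc by simp
  qed
qed




lemma sv_ext:
  fixes S :: "'a::euclidean_space set"
  assumes S: "affine S" and D: "finite D" and fT: "finite T"
  shows "c0 \<in> sv S T G \<Longrightarrow> (\<forall>j\<in>D. \<not> S \<subseteq> hp (G j)) \<Longrightarrow> \<exists>c\<in>sv S (T \<union> D) G. c \<inter> T = c0"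
  using D
proof (induction D rule: finite_induct)
  case empty
  then show ?case by (auto simp: sv_def)
next
  case (insert j D)
  obtain c where c: "c \<in> sv S (T \<union> D) G" "c \<inter> T = c0" using insert by auto
  show ?case
  proof (cases "j \<in> T")
    case True
    then have "T \<union> insert j D = T \<union> D" by auto
    then show ?thesis using c by auto
  next
    case False
    obtain x where cI: "c \<subseteq> T \<union> D" and x: "x \<in> S" "sok G c (T \<union> D) x" using c(1) by (auto simp: sv_def)
    have finTD: "finite (T \<union> D)" using fT insert(1) by simp
    obtain z where zS: "z \<in> S" and zj: "fst (G j) \<bullet> z \<noteq> snd (G j)" using insert(5) by (auto simp: hp_def)
    obtain y where y: "y \<in> S" "sok G c (T \<union> D) y" "fst (G j) \<bullet> y \<noteq> snd (G j)"
    proof (cases "fst (G j) \<bullet> x = snd (G j)")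
      case True
      then show ?thesis using move_off(1)[OF S x(1) zS finTD x(2) zj True] that by force
    next
      case False then show ?thesis using that x by blast
    qed
    have jn: "j \<notin> T \<union> D" using False insert(2) by auto
    show ?thesis
    proof (cases "fst (G j) \<bullet> y > snd (G j)")
      case True
      have "sok G (insert j c) (T \<union> insert j D) y"
        using y True jn by (auto simp: sok_def)
      moreover have "insert j c \<inter> T = c0" using c(2) False by auto
      moreover have "insert j c \<subseteq> T \<union> insert j D" using cI by auto
      ultimately have "insert j c \<in> sv S (T \<union> insert j D) G" "insert j c \<inter> T = c0"
        using y(1) by (auto simp: sv_def)
      then show ?thesis by blast
    next
      case F: False
      have "sok G c (T \<union> insert j D) y"
        using y F jn cI by (auto simp: sok_def)
      then show ?thesis using cI y(1) c(2) by (auto simp: sv_def intro!: bexI[of _ c])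
    qed
  qed
qed

lemma sv_restrict:
  fixes S :: "'a::euclidean_space set"
  assumes S: "affine S" and fI: "finite I" and T: "T \<subseteq> I" and ns: "\<forall>j\<in>I. \<not> S \<subseteq> hp (G j)"
  shows "(\<lambda>c. c \<inter> T) ` sv S I G = sv S T G"
proof (intro equalityI subsetI)
  fix c' assume "c' \<in> (\<lambda>c. c \<inter> T) ` sv S I G"
  then obtain c x where "c' = c \<inter> T" "x \<in> S" "sok G c I x" by (auto simp: sv_def)
  then show "c' \<in> sv S T G" using T by (auto simp: sv_def sok_def)
next
  fix c0 assume c0: "c0 \<in> sv S T G"
  have fT: "finite T" using fI T finite_subset by blast
  obtain c where "c \<in> sv S (T \<union> (I - T)) G" "c \<inter> T = c0"
    using sv_ext[OF S _ fT c0, of "I - T"] fI ns by auto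
  moreover have "T \<union> (I - T) = I" using T by auto
  ultimately show "c0 \<in> (\<lambda>c. c \<inter> T) ` sv S I G" by auto
qed

lemma gp_nsub:
  assumes g: "gp S I G k" and j: "j \<in> I"
  shows "\<not> S \<subseteq> hp (G j)"
proof
  assume sub: "S \<subseteq> hp (G j)"
  have aS: "aff_dim S = int k" using gp_affdim[OF g] .
  have flj: "S \<inter> fl G {j} = S" using sub by (auto simp: fl_def)
  show False
  proof (cases k)
    case 0
    then have "S = {}" using gpD2[OF g, of "{j}"] j flj by simp
    then show False using aS by simp
  next
    case (Suc k')
    then have "aff_dim S = int k - 1" using gpD1[OF g, of "{j}"] j flj by simp
    then show False using aS by simp
  qed
qed

lemma binom_sum_less: "k < m \<Longrightarrow> (\<Sum>i\<le>k. m choose i) < 2 ^ m"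
proof -
  assume km: "k < m"
  have "(\<Sum>i\<le>k. m choose i) \<le> (\<Sum>i<m. m choose i)"
    by (rule sum_mono2) (use km in auto)
  also have "\<dots> < (\<Sum>i\<le>m. m choose i)"
    by (simp add: lessThan_Suc_atMost[symmetric])
  also have "\<dots> = 2 ^ m" by (rule choose_row_sum)
  finally show ?thesis .
qed

lemma binom_sum_full: "(\<Sum>i\<le>m. m choose i) = 2 ^ m" by (rule choose_row_sum)

lemma shatters_sv:
  fixes S :: "'a::euclidean_space set"
  assumes S: "affine S" and fI: "finite I" and T: "T \<subseteq> I" and g: "gp S I G k"
  shows "shatters (sv S I G) T \<longleftrightarrow> card T \<le> k"
proof -
  have ns: "\<forall>j\<in>I. \<not> S \<subseteq> hp (G j)" using gp_nsub[OF g] by blast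
  have fT: "finite T" using fI T finite_subset by blast
  have sh: "shatters (sv S I G) T \<longleftrightarrow> sv S T G = Pow T"
    unfolding shatters_def sv_restrict[OF S fI T ns] ..
  have cnt: "card (sv S T G) = (\<Sum>i\<le>k. card T choose i)"
    using count_sv[OF fT S gp_mono[OF g T]] .
  have subP: "sv S T G \<subseteq> Pow T" by (auto simp: sv_def)
  show ?thesis
  proof
    assume "shatters (sv S I G) T"
    then have "sv S T G = Pow T" using sh by simp
    then have "(\<Sum>i\<le>k. card T choose i) = 2 ^ card T" using cnt fT by (simp add: card_Pow)
    then show "card T \<le> k" using binom_sum_less[of k "card T"] by (cases "k < card T") auto
  next
    assume kT: "card T \<le> k"
    have "(\<Sum>i\<le>k. card T choose i) = (\<Sum>i\<le>card T. card T choose i)"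
    proof (rule sum.mono_neutral_right)
      show "\<forall>i\<in>{..k} - {..card T}. card T choose i = 0" by auto
    qed (use kT in auto)
    then have "card (sv S T G) = card (Pow T)" using cnt fT by (simp add: card_Pow choose_row_sum)
    then have "sv S T G = Pow T" using card_subset_eq[OF _ subP] fT by simp
    then show "shatters (sv S I G) T" using sh by simp
  qed
qed

lemma maximum_sv:
  fixes S :: "'a::euclidean_space set"
  assumes S: "affine S" and g: "gp S {..<n} G k" and kn: "k \<le> n"
  shows "maximum_class n k (sv S {..<n} G)"
  unfolding maximum_class_def
proof (intro conjI)
  show "sv S {..<n} G \<subseteq> Pow {..<n}" by (auto simp: sv_def)
  show "\<exists>T\<subseteq>{..<n}. card T = k \<and> shatters (sv S {..<n} G) T"
    using shatters_sv[OF S _ _ g, of "{..<k}"] kn by (intro exI[of _ "{..<k}"]) auto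
  show "\<forall>T. T \<subseteq> {..<n} \<and> shatters (sv S {..<n} G) T \<longrightarrow> card T \<le> k"
    using shatters_sv[OF S _ _ g] by auto
  show "card (sv S {..<n} G) = (\<Sum>i\<le>k. n choose i)"
    using count_sv[OF _ S g] by simp
qed




lemma sok_Int: "sok G c I x \<longleftrightarrow> sok G (c \<inter> I) I x"
  by (auto simp: sok_def)

lemma sok_union:
  assumes "I1 \<inter> I2 = {}"
  shows "sok G ((c1 \<inter> I1) \<union> (c2 \<inter> I2)) (I1 \<union> I2) x \<longleftrightarrow> sok G c1 I1 x \<and> sok G c2 I2 x"
  using assms unfolding sok_def by blast

lemma sok_split:
  assumes "K \<subseteq> I" "c \<subseteq> I"
  shows "sok G c I x \<longleftrightarrow> sok G c (I - K) x \<and> sok G c K x"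
  using assms unfolding sok_def by blast

definition cube :: "nat set \<Rightarrow> nat set \<Rightarrow> nat set set" where
  "cube K b = {(b - K) \<union> T | T. T \<subseteq> K}"

lemma convex_lemma:
  fixes S :: "'a::euclidean_space set"
  assumes S: "convex S" and J: "finite J"
  shows "I' \<inter> J = {} \<Longrightarrow> (\<forall>\<sigma>\<subseteq>J. \<exists>x\<in>S. x \<in> fl G L \<and> sok G c I' x \<and> sok G \<sigma> J x) \<Longrightarrow>
     \<exists>x\<in>S. x \<in> fl G (L \<union> J) \<and> sok G c I' x"
  using J
proof (induction J arbitrary: L rule: finite_induct)
  case empty
  then show ?case by auto
next
  case (insert j J)
  have disj: "I' \<inter> J = {}" using insert(4) by auto
  have "\<forall>\<sigma>\<subseteq>J. \<exists>x\<in>S. x \<in> fl G (insert j L) \<and> sok G c I' x \<and> sok G \<sigma> J x"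
  proof (intro allI impI)
    fix \<sigma> assume \<sigma>: "\<sigma> \<subseteq> J"
    obtain x1 where x1: "x1 \<in> S" "x1 \<in> fl G L" "sok G c I' x1" "sok G \<sigma> (insert j J) x1"
      using insert(5) \<sigma> by blast
    obtain x2 where x2: "x2 \<in> S" "x2 \<in> fl G L" "sok G c I' x2" "sok G (insert j \<sigma>) (insert j J) x2"
      using insert(5) \<sigma> by blast
    have jn: "j \<notin> \<sigma>" using \<sigma> insert(2) by auto
    have s1: "sok G \<sigma> J x1" "fst (G j) \<bullet> x1 < snd (G j)" using x1(4) jn by (auto simp: sok_insert)
    have s2: "sok G \<sigma> J x2" "fst (G j) \<bullet> x2 > snd (G j)" using x2(4) insert(2) by (auto simp: sok_insert sok_insert_other)
    let ?c = "(c \<inter> I') \<union> (\<sigma> \<inter> J)"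
    have t1: "sok G ?c (I' \<union> J) x1" using sok_union[OF disj] x1(3) s1(1) by blast
    have t2: "sok G ?c (I' \<union> J) x2" using sok_union[OF disj] x2(3) s2(1) by blast
    obtain y where y: "y \<in> S" "sok G ?c (I' \<union> J) y" "\<forall>l\<in>insert j L. fst (G l) \<bullet> y = snd (G l)"
      using cross_point[OF S x1(1) x2(1) t1 t2, of L j] x1(2) x2(2) s1(2) s2(2) by (auto simp: mem_fl)
    have "sok G c I' y \<and> sok G \<sigma> J y" using sok_union[OF disj] y(2) by blast
    then show "\<exists>x\<in>S. x \<in> fl G (insert j L) \<and> sok G c I' x \<and> sok G \<sigma> J x"
      using y(1,3) by (auto simp: mem_fl)
  qed
  from insert(3)[OF disj this] show ?case by (simp add: Un_insert_left Un_insert_right)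
qed

lemma cube_point:
  fixes S :: "'a::euclidean_space set"
  assumes S: "convex S" and fI: "finite I" and K: "K \<subseteq> I"
    and sub: "cube K b \<subseteq> sv S I G"
  shows "\<exists>x\<in>S. x \<in> fl G K \<and> sok G b (I - K) x"
proof -
  have fK: "finite K" using fI K finite_subset by blast
  have "\<forall>\<sigma>\<subseteq>K. \<exists>x\<in>S. x \<in> fl G {} \<and> sok G b (I - K) x \<and> sok G \<sigma> K x"
  proof (intro allI impI)
    fix \<sigma> assume \<sigma>: "\<sigma> \<subseteq> K"
    have "(b - K) \<union> \<sigma> \<in> cube K b" using \<sigma> by (auto simp: cube_def)
    then obtain x where x: "x \<in> S" "sok G ((b - K) \<union> \<sigma>) I x" using sub by (auto simp: sv_def)
    have "sok G b (I - K) x" "sok G \<sigma> K x" using x(2) K \<sigma> unfolding sok_def by blast+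
    then show "\<exists>x\<in>S. x \<in> fl G {} \<and> sok G b (I - K) x \<and> sok G \<sigma> K x" using x(1) by auto
  qed
  from convex_lemma[OF S fK _ this] show ?thesis by auto
qed

lemma perturb_cube:
  fixes S :: "'a::euclidean_space set"
  assumes S: "affine S" and fI: "finite I" and K: "K \<subseteq> I" and g: "gp S I G k" and cK: "card K \<le> k"
    and x: "x \<in> S" "x \<in> fl G K" "sok G b (I - K) x" and bI: "b \<subseteq> I"
  shows "cube K b \<subseteq> sv S I G"
proof -
  have fK: "finite K" using fI K finite_subset by blast
  have main: "finite J \<Longrightarrow> J \<subseteq> K \<Longrightarrow> \<forall>\<sigma>\<subseteq>J. \<exists>y\<in>S. y \<in> fl G (K - J) \<and> sok G b (I - K) y \<and> sok G \<sigma> J y" for J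
  proof (induction J rule: finite_induct)
    case empty then show ?case using x by (auto simp: sok_def)
  next
    case (insert j J)
    note 3 = insert
    have JK: "J \<subseteq> K" and jK: "j \<in> K" using 3 by auto
    let ?M = "K - insert j J"
    have fM: "finite ?M" using fK by auto
    have jM: "j \<notin> ?M" by auto
    have cM: "card (insert j ?M) \<le> k" using card_mono[OF fK, of "insert j ?M"] jK cK by auto
    have a1: "aff_dim (S \<inter> fl G (insert j ?M)) = int k - int (card (insert j ?M))"
      using gpD1[OF g _ cM] jK K by auto
    have a2: "aff_dim (S \<inter> fl G ?M) = int k - int (card ?M)"
      using gpD1[OF g, of ?M] cM K fM jM by auto
    have nsub: "\<not> S \<inter> fl G ?M \<subseteq> hp (G j)"
    proof
      assume "S \<inter> fl G ?M \<subseteq> hp (G j)"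
      then have "S \<inter> fl G (insert j ?M) = S \<inter> fl G ?M" by (auto simp: fl_insert)
      then show False using a1 a2 fM jM by simp
    qed
    then obtain z where z: "z \<in> S \<inter> fl G ?M" "fst (G j) \<bullet> z \<noteq> snd (G j)" by (auto simp: hp_def)
    have aff: "affine (S \<inter> fl G ?M)" using S affine_fl by blast
    have disj: "(I - K) \<inter> J = {}" using JK by auto
    show ?case
    proof (intro allI impI)
      fix \<sigma> assume \<sigma>: "\<sigma> \<subseteq> insert j J"
      obtain y where y: "y \<in> S" "y \<in> fl G (K - J)" "sok G b (I - K) y" "sok G (\<sigma> - {j}) J y"
        using 3(3)[OF JK] \<sigma> by blast
      let ?c = "(b \<inter> (I - K)) \<union> ((\<sigma> - {j}) \<inter> J)"
      have yc: "sok G ?c ((I - K) \<union> J) y" using sok_union[OF disj] y(3,4) by blast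
      have yM: "y \<in> S \<inter> fl G ?M" using y(1,2) by (auto simp: mem_fl)
      have yj: "fst (G j) \<bullet> y = snd (G j)" using y(2) jK 3(2) by (auto simp: mem_fl)
      have finIJ: "finite ((I - K) \<union> J)" using fI 3(1) by simp
      note mo = move_off[OF aff yM z(1) finIJ yc z(2) yj]
      obtain y' where y': "y' \<in> S \<inter> fl G ?M" "sok G ?c ((I - K) \<union> J) y'"
        "j \<in> \<sigma> \<longrightarrow> fst (G j) \<bullet> y' > snd (G j)" "j \<notin> \<sigma> \<longrightarrow> fst (G j) \<bullet> y' < snd (G j)"
        using mo by (cases "j \<in> \<sigma>") blast+
      have "sok G b (I - K) y'" "sok G (\<sigma> - {j}) J y'" using y'(2) sok_union[OF disj] by blast+
      then have "sok G \<sigma> (insert j J) y'" using y'(3,4) 3(2) by (auto simp: sok_def)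
      then show "\<exists>y\<in>S. y \<in> fl G (K - insert j J) \<and> sok G b (I - K) y \<and> sok G \<sigma> (insert j J) y"
        using y' \<open>sok G b (I - K) y'\<close> by blast
    qed
  qed
  show ?thesis
  proof
    fix q assume "q \<in> cube K b"
    then obtain \<sigma> where q: "q = (b - K) \<union> \<sigma>" "\<sigma> \<subseteq> K" by (auto simp: cube_def)
    obtain y where y: "y \<in> S" "sok G b (I - K) y" "sok G \<sigma> K y" using main[OF fK subset_refl] q(2) by auto
    have "sok G q I y" using y(2,3) q K unfolding sok_def by blast
    moreover have "q \<subseteq> I" using q bI K by auto
    ultimately show "q \<in> sv S I G" using y(1) by (auto simp: sv_def)
  qed
qed




lemma concept_of_eq: "concept_of n H = (\<lambda>c. {i\<in>{..<n}. c \<subseteq> pos_side (H i)})"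
  by (auto simp: concept_of_def fun_eq_iff)

lemma arr_sv: "arr_class n H = sv UNIV {..<n} H"
  unfolding arr_class_def concept_of_eq using components_sv[of "{..<n}" H UNIV] by simp

lemma ind_sv: "induced_class n H h = sv (hp h) {..<n} H"
  unfolding induced_class_def concept_of_eq using components_sv[of "{..<n}" H "hp h"] by simp

lemma simple_gp:
  fixes H :: "nat \<Rightarrow> 'a::euclidean_space ohp"
  assumes "simple_arrangement n H"
  shows "gp UNIV {..<n} H DIM('a)"
  using assms unfolding simple_arrangement_def gp_def fl_def by simp

lemma upd_fl: "J \<subseteq> {..<n} \<Longrightarrow> (\<Inter>i\<in>J. hp ((H(n := h)) i)) = fl H J"
  unfolding fl_def by (intro INF_cong) auto

lemma upd_fl_ins: "J \<subseteq> {..<n} \<Longrightarrow> (\<Inter>i\<in>insert n J. hp ((H(n := h)) i)) = hp h \<inter> fl H J"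
  using upd_fl[of J n H h] by simp

lemma affine_hp: "affine (hp h)"
  unfolding hp_def by (rule affine_hyperplane)

lemma generic_gp:
  fixes H :: "nat \<Rightarrow> 'a::euclidean_space ohp"
  assumes g: "generic_hyperplane n H h"
  shows "gp (hp h) {..<n} H (DIM('a) - 1)"
  unfolding gp_def
proof (intro conjI allI impI)
  have d1: "DIM('a) \<ge> 1" using DIM_positive by (simp add: Suc_le_eq)
  fix J assume J: "J \<subseteq> {..<n} \<and> card J \<le> DIM('a) - 1"
  have fJ: "finite J" using J finite_subset by blast
  have nJ: "n \<notin> J" using J by auto
  have G2: "\<forall>K. K \<subseteq> {..<Suc n} \<and> card K \<le> DIM('a) \<longrightarrow>
          aff_dim (\<Inter>i\<in>K. hp ((H(n := h)) i)) = int DIM('a) - int (card K)"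
    using g unfolding generic_hyperplane_def by blast
  have "Suc (card J) \<le> DIM('a)" using J d1 by linarith
  then have "insert n J \<subseteq> {..<Suc n}" "card (insert n J) \<le> DIM('a)" using J fJ nJ by auto
  then have "aff_dim (\<Inter>i\<in>insert n J. hp ((H(n := h)) i)) = int DIM('a) - int (card (insert n J))"
    using G2 by blast
  then show "aff_dim (hp h \<inter> fl H J) = int (DIM('a) - 1) - int (card J)"
    using upd_fl_ins[of J n H h] J fJ nJ d1 by simp
next
  fix J assume J: "J \<subseteq> {..<n} \<and> card J = Suc (DIM('a) - 1)"
  have d1: "DIM('a) \<ge> 1" using DIM_positive by (simp add: Suc_le_eq)
  have fJ: "finite J" using J finite_subset by blast
  have nJ: "n \<notin> J" using J by auto
  have G3: "\<forall>K. K \<subseteq> {..<Suc n} \<and> card K = DIM('a) + 1 \<longrightarrow> (\<Inter>i\<in>K. hp ((H(n := h)) i)) = {}"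
    using g unfolding generic_hyperplane_def by blast
  have "insert n J \<subseteq> {..<Suc n}" "card (insert n J) = DIM('a) + 1" using J fJ nJ d1 by auto
  then have "(\<Inter>i\<in>insert n J. hp ((H(n := h)) i)) = {}" using G3 by blast
  then show "hp h \<inter> fl H J = {}" using upd_fl_ins[of J n H h] J by simp
qed

lemma part1:
  fixes H :: "nat \<Rightarrow> 'a::euclidean_space ohp"
  assumes s: "simple_arrangement n H" and g: "generic_hyperplane n H h"
  shows "maximum_class n (DIM('a) - 1) (induced_class n H h) \<and> induced_class n H h \<subseteq> arr_class n H"
proof
  have "n \<ge> DIM('a)" using s by (simp add: simple_arrangement_def)
  then show "maximum_class n (DIM('a) - 1) (induced_class n H h)"
    unfolding ind_sv by (intro maximum_sv[OF affine_hp generic_gp[OF g]]) auto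
  show "induced_class n H h \<subseteq> arr_class n H"
    unfolding ind_sv arr_sv by (auto simp: sv_def)
qed

lemma is_cube_iff: "is_cube n k Q \<longleftrightarrow> (\<exists>K b. K \<subseteq> {..<n} \<and> card K = k \<and> b \<subseteq> {..<n} \<and> Q = cube K b)"
  unfolding is_cube_def cube_def ..

lemma cube_memI: "T \<subseteq> K \<Longrightarrow> (b - K) \<union> T \<in> cube K b"
  unfolding cube_def by blast

lemma cube_memD: "x \<in> cube K b \<Longrightarrow> i \<notin> K \<Longrightarrow> i \<in> x \<longleftrightarrow> i \<in> b"
  unfolding cube_def by blast

lemma cube_sub:
  assumes sub: "cube K b \<subseteq> cube K2 b2"
  shows "K \<subseteq> K2 \<and> b - K2 = b2 - K2"
proof -
  have b0: "(b - K) \<union> {} \<in> cube K2 b2" using subsetD[OF sub cube_memI[of "{}" K b]] by simp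
  have KK: "K \<subseteq> K2"
  proof
    fix i assume iK: "i \<in> K"
    have b1: "(b - K) \<union> {i} \<in> cube K2 b2" using subsetD[OF sub cube_memI[of "{i}" K b]] iK by simp
    show "i \<in> K2"
    proof (rule ccontr)
      assume nK: "i \<notin> K2"
      have "i \<in> (b - K) \<union> {i} \<longleftrightarrow> i \<in> b2" by (rule cube_memD[OF b1 nK])
      moreover have "i \<in> (b - K) \<union> {} \<longleftrightarrow> i \<in> b2" by (rule cube_memD[OF b0 nK])
      ultimately show False using iK by simp
    qed
  qed
  have "i \<in> b \<longleftrightarrow> i \<in> b2" if "i \<notin> K2" for i
  proof -
    have "i \<notin> K" using that KK by blast
    then show ?thesis using cube_memD[OF b0 that] by simp
  qed
  then have "b - K2 = b2 - K2" by blast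
  then show ?thesis using KK by blast
qed

lemma cube_minus: "cube K (b - K) = cube K b"
proof -
  have "(b - K) - K = b - K" by blast
  then show ?thesis by (simp add: cube_def)
qed

lemma cube_eqK: "cube K b = cube K2 b2 \<Longrightarrow> K = K2"
  using cube_sub[of K b K2 b2] cube_sub[of K2 b2 K b] by auto

lemma cube_mono: assumes jK: "j \<notin> K'" shows "cube K' b \<subseteq> cube (insert j K') b"
proof
  fix q assume "q \<in> cube K' b"
  then obtain T where q: "q = (b - K') \<union> T" "T \<subseteq> K'" by (auto simp: cube_def)
  have "q = (b - insert j K') \<union> ((b \<inter> {j}) \<union> T)" using q jK by auto
  moreover have "(b \<inter> {j}) \<union> T \<subseteq> insert j K'" using q by auto
  ultimately show "q \<in> cube (insert j K') b" by (auto simp: cube_def)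
qed

definition goodset :: "nat set \<Rightarrow> (nat \<Rightarrow> real) \<Rightarrow> real \<Rightarrow> nat set" where
  "goodset J0 t t0 = {j\<in>J0. \<forall>i\<in>J0 - {j}. (t j - t i) * (t0 - t i) > 0}"

lemma goodset_below:
  assumes fin: "finite J0" and ne: "J0 \<noteq> {}" and inj: "inj_on t J0" and below: "\<forall>i\<in>J0. t0 < t i"
  shows "card (goodset J0 t t0) = 1"
proof -
  have "Min (t ` J0) \<in> t ` J0" using fin ne by simp
  then obtain m where m: "m \<in> J0" "t m = Min (t ` J0)" by (metis imageE)
  have le: "i \<in> J0 \<Longrightarrow> t m \<le> t i" for i using m fin by simp
  have lt: "t m < t i" if "i \<in> J0" "i \<noteq> m" for i
  proof -
    have "t m \<noteq> t i" using inj m(1) that unfolding inj_on_def by blast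
    then show ?thesis using le[OF that(1)] by linarith
  qed
  have "goodset J0 t t0 = {m}"
  proof (intro equalityI subsetI)
    fix j assume j: "j \<in> goodset J0 t t0"
    show "j \<in> {m}"
    proof (rule ccontr)
      assume "j \<notin> {m}"
      then have "(t j - t m) * (t0 - t m) > 0" using j m(1) by (auto simp: goodset_def)
      moreover have "t j - t m > 0" using lt[of j] j \<open>j \<notin> {m}\<close> by (auto simp: goodset_def)
      moreover have "t0 - t m < 0" using below m(1) by auto
      ultimately show False by (simp add: zero_less_mult_iff)
    qed
  next
    fix j assume "j \<in> {m}"
    then have j: "j = m" by simp
    have "(t m - t i) * (t0 - t i) > 0" if "i \<in> J0 - {m}" for i
      using lt[of i] below that by (intro mult_neg_neg) auto
    then show "j \<in> goodset J0 t t0" using j m(1) by (auto simp: goodset_def)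
  qed
  then show ?thesis by simp
qed

lemma goodset_above:
  assumes fin: "finite J0" and ne: "J0 \<noteq> {}" and inj: "inj_on t J0" and above: "\<forall>i\<in>J0. t0 > t i"
  shows "card (goodset J0 t t0) = 1"
proof -
  have e: "(- t j - - t i) * (- t0 - - t i) = (t j - t i) * (t0 - t i)" for i j
    by (simp add: algebra_simps)
  have "goodset J0 t t0 = goodset J0 (\<lambda>i. - t i) (- t0)"
    by (simp only: goodset_def e)
  moreover have "inj_on (\<lambda>i. - t i) J0" using inj by (auto simp: inj_on_def)
  ultimately show ?thesis using goodset_below[of J0 "\<lambda>i. - t i" "- t0"] fin ne above by auto
qed

lemma goodset_one:
  assumes fin: "finite J0" and inj: "inj_on t J0" and t0: "t0 \<notin> t ` J0"
    and one: "card (goodset J0 t t0) = 1"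
  shows "(\<forall>i\<in>J0. t0 < t i) \<or> (\<forall>i\<in>J0. t0 > t i)"
proof (rule ccontr)
  assume "\<not> ?thesis"
  then obtain i1 i2 where i1': "i1 \<in> J0" "\<not> t0 < t i1" and i2': "i2 \<in> J0" "\<not> t0 > t i2"
    by blast
  have "t i1 \<noteq> t0" "t i2 \<noteq> t0" using t0 i1' i2' by force+
  then have i1: "i1 \<in> J0" "t i1 < t0" and i2: "i2 \<in> J0" "t i2 > t0" using i1' i2' by auto
  define A where "A = {i\<in>J0. t i < t0}"
  define B where "B = {i\<in>J0. t i > t0}"
  have fA: "finite (t ` A)" "t ` A \<noteq> {}" using fin i1 by (auto simp: A_def)
  have fB: "finite (t ` B)" "t ` B \<noteq> {}" using fin i2 by (auto simp: B_def)
  obtain m1 where m1: "m1 \<in> A" "t m1 = Max (t ` A)" using Max_in[OF fA] by auto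
  obtain m2 where m2: "m2 \<in> B" "t m2 = Min (t ` B)" using Min_in[OF fB] by auto
  have g1: "m1 \<in> goodset J0 t t0"
    unfolding goodset_def
  proof (intro CollectI conjI ballI)
    show "m1 \<in> J0" using m1 by (auto simp: A_def)
    fix i assume i: "i \<in> J0 - {m1}"
    show "(t m1 - t i) * (t0 - t i) > 0"
    proof (cases "t i < t0")
      case True
      then have "t i \<le> t m1" using m1 fA i by (auto simp: A_def)
      moreover have "t i \<noteq> t m1" using inj i m1(1) by (auto simp: A_def inj_on_def)
      ultimately show ?thesis using True by (intro mult_pos_pos) auto
    next
      case False
      moreover have "t i \<noteq> t0" using t0 i by force
      ultimately have "t i > t0" by linarith
      then show ?thesis using m1(1) by (intro mult_neg_neg) (auto simp: A_def)
    qed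
  qed
  have g2: "m2 \<in> goodset J0 t t0"
    unfolding goodset_def
  proof (intro CollectI conjI ballI)
    show "m2 \<in> J0" using m2 by (auto simp: B_def)
    fix i assume i: "i \<in> J0 - {m2}"
    show "(t m2 - t i) * (t0 - t i) > 0"
    proof (cases "t i > t0")
      case True
      then have "t m2 \<le> t i" using m2 fB i by (auto simp: B_def)
      moreover have "t i \<noteq> t m2" using inj i m2(1) by (auto simp: B_def inj_on_def)
      ultimately show ?thesis using True by (intro mult_neg_neg) auto
    next
      case False
      moreover have "t i \<noteq> t0" using t0 i by force
      ultimately have "t i < t0" by linarith
      then show ?thesis using m2(1) by (intro mult_pos_pos) (auto simp: B_def)
    qed
  qed
  have "m1 \<noteq> m2" using m1(1) m2(1) by (auto simp: A_def B_def)
  moreover have "finite (goodset J0 t t0)" using fin by (auto simp: goodset_def)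
  moreover have "{m1, m2} \<subseteq> goodset J0 t t0" using g1 g2 by auto
  ultimately have "card (goodset J0 t t0) \<ge> 2" using card_mono[of "goodset J0 t t0" "{m1, m2}"] by auto
  then show False using one by simp
qed




lemma simple_dim:
  fixes H :: "nat \<Rightarrow> 'a::euclidean_space ohp"
  assumes s: "simple_arrangement n H" and K: "K \<subseteq> {..<n}" "card K \<le> DIM('a)"
  shows "aff_dim (fl H K) = int DIM('a) - int (card K)"
  using gpD1[OF simple_gp[OF s] K] by simp

lemma simple_empty:
  fixes H :: "nat \<Rightarrow> 'a::euclidean_space ohp"
  assumes s: "simple_arrangement n H" and K: "K \<subseteq> {..<n}" "card K = Suc DIM('a)"
  shows "fl H K = {}"
  using gpD2[OF simple_gp[OF s] K] by simp

lemma simple_vertex: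
  fixes H :: "nat \<Rightarrow> 'a::euclidean_space ohp"
  assumes s: "simple_arrangement n H" and K: "K \<subseteq> {..<n}" "card K = DIM('a)"
  shows "\<exists>v. fl H K = {v}"
  using simple_dim[OF s K(1)] K(2) by (simp add: aff_dim_eq_0)

lemma hp_pair: "hp (a, \<beta>) = {x. a \<bullet> x = \<beta>}" by (simp add: hp_def)

lemma line_param:
  fixes L :: "'a::euclidean_space set"
  assumes L: "affine L" "aff_dim L = 1" and p: "L \<inter> {x. a \<bullet> x = \<beta>} = {p}"
  shows "\<exists>w. a \<bullet> w = 1 \<and> (\<forall>s. p + s *\<^sub>R w \<in> L) \<and> (\<forall>y\<in>L. y = p + (a \<bullet> y - \<beta>) *\<^sub>R w)"
proof -
  have pL: "p \<in> L" and ap: "a \<bullet> p = \<beta>" using p by auto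
  have "L \<noteq> {p}" using L(2) by auto
  then obtain z where z: "z \<in> L" "z \<noteq> p" using pL by blast
  have az: "a \<bullet> z \<noteq> \<beta>" using z p by auto
  define c where "c = a \<bullet> z - \<beta>"
  have c0: "c \<noteq> 0" using az by (simp add: c_def)
  define w where "w = (1 / c) *\<^sub>R (z - p)"
  have aw: "a \<bullet> w = 1" using c0 ap by (simp add: w_def c_def inner_diff_right)
  have line: "p + s *\<^sub>R w \<in> L" for s
  proof -
    have "p + (s / c) *\<^sub>R (z - p) \<in> L" by (rule mem_affine_3_minus[OF L(1) pL z(1) pL])
    then show ?thesis by (simp add: w_def)
  qed
  have rep: "y = p + (a \<bullet> y - \<beta>) *\<^sub>R w" if y: "y \<in> L" for y
  proof -
    define q where "q = p + (a \<bullet> y - \<beta>) *\<^sub>R w"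
    have qL: "q \<in> L" using line by (simp add: q_def)
    have aq: "a \<bullet> q = a \<bullet> y" using ap aw by (simp add: q_def inner_add_right)
    have rL: "y + 1 *\<^sub>R (p - q) \<in> L" by (rule mem_affine_3_minus[OF L(1) y pL qL])
    have "a \<bullet> (y + 1 *\<^sub>R (p - q)) = \<beta>" using aq ap by (simp add: inner_add_right inner_diff_right)
    then have "y + 1 *\<^sub>R (p - q) \<in> L \<inter> {x. a \<bullet> x = \<beta>}" using rL by blast
    then have "y + 1 *\<^sub>R (p - q) = p" using p by blast
    then have "y = q" by (simp add: algebra_simps)
    then show ?thesis by (simp add: q_def)
  qed
  show ?thesis using aw line rep by blast
qed

locale line_setup =
  fixes H :: "nat \<Rightarrow> 'a::euclidean_space ohp" and n :: nat and K' :: "nat set" and a :: 'a and \<beta> :: real and p :: 'a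
  assumes s: "simple_arrangement n H"
    and K': "K' \<subseteq> {..<n}" "card K' = DIM('a) - 1"
    and p: "fl H K' \<inter> {x. a \<bullet> x = \<beta>} = {p}"
begin

abbreviation "L \<equiv> fl H K'"

lemma d1: "DIM('a) \<ge> 1" using DIM_positive by (simp add: Suc_le_eq)

lemma fK': "finite K'" using K'(1) finite_subset by blast

lemma nd: "n \<ge> DIM('a)" using s by (simp add: simple_arrangement_def)

lemma L1: "aff_dim L = 1"
  using simple_dim[OF s K'(1)] K'(2) d1 by simp

lemma param: "\<exists>w. a \<bullet> w = 1 \<and> (\<forall>s. p + s *\<^sub>R w \<in> L) \<and> (\<forall>y\<in>L. y = p + (a \<bullet> y - \<beta>) *\<^sub>R w)"
  using line_param[OF affine_fl L1 p] .

lemma inj: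
  assumes "y1 \<in> L" "y2 \<in> L" "a \<bullet> y1 = a \<bullet> y2" shows "y1 = y2"
proof -
  obtain w where w: "\<forall>y\<in>L. y = p + (a \<bullet> y - \<beta>) *\<^sub>R w" using param by blast
  have "y1 = p + (a \<bullet> y1 - \<beta>) *\<^sub>R w" "y2 = p + (a \<bullet> y2 - \<beta>) *\<^sub>R w" using w assms(1,2) by blast+
  then show ?thesis using assms(3) by simp
qed

lemma surj: "\<exists>y\<in>L. a \<bullet> y = c"
proof -
  obtain w where w: "a \<bullet> w = 1" "\<forall>s. p + s *\<^sub>R w \<in> L" using param by blast
  have "a \<bullet> p = \<beta>" using p by auto
  then have "a \<bullet> (p + (c - \<beta>) *\<^sub>R w) = c" using w(1) by (simp add: inner_add_right)
  then show ?thesis using w(2) by blast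
qed

lemma vertex: "i \<in> {..<n} - K' \<Longrightarrow> \<exists>v. fl H (insert i K') = {v}"
  using simple_vertex[OF s, of "insert i K'"] K' fK' d1 by auto

definition V :: "nat \<Rightarrow> 'a" where "V i = (THE v. fl H (insert i K') = {v})"

lemma V: assumes "i \<in> {..<n} - K'" shows "fl H (insert i K') = {V i}"
proof -
  obtain v where v: "fl H (insert i K') = {v}" using vertex[OF assms] by blast
  have "V i = v" unfolding V_def by (rule the_equality) (use v in auto)
  then show ?thesis using v by simp
qed

lemma VL: "i \<in> {..<n} - K' \<Longrightarrow> V i \<in> L" and Vhp: "i \<in> {..<n} - K' \<Longrightarrow> fst (H i) \<bullet> V i = snd (H i)"
  using V[of i] by (auto simp: fl_insert hp_def)

lemma affine_fun:
  assumes i: "i \<in> {..<n} - K'"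
  shows "\<exists>\<alpha>. \<alpha> \<noteq> 0 \<and> (\<forall>y\<in>L. fst (H i) \<bullet> y - snd (H i) = \<alpha> * (a \<bullet> y - a \<bullet> V i))"
proof -
  obtain w where w: "a \<bullet> w = 1" "\<forall>s. p + s *\<^sub>R w \<in> L" "\<forall>y\<in>L. y = p + (a \<bullet> y - \<beta>) *\<^sub>R w" using param by blast
  have eq: "fst (H i) \<bullet> y - snd (H i) = (fst (H i) \<bullet> w) * (a \<bullet> y - a \<bullet> V i)" if y: "y \<in> L" for y
  proof -
    have ye: "y = p + (a \<bullet> y - \<beta>) *\<^sub>R w" using w(3) y by blast
    have ve: "V i = p + (a \<bullet> V i - \<beta>) *\<^sub>R w" using w(3) VL[OF i] by blast
    have "fst (H i) \<bullet> y = fst (H i) \<bullet> p + (a \<bullet> y - \<beta>) * (fst (H i) \<bullet> w)"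
      using arg_cong[OF ye, of "\<lambda>z. fst (H i) \<bullet> z"] by (simp add: inner_add_right)
    moreover have "fst (H i) \<bullet> V i = fst (H i) \<bullet> p + (a \<bullet> V i - \<beta>) * (fst (H i) \<bullet> w)"
      using arg_cong[OF ve, of "\<lambda>z. fst (H i) \<bullet> z"] by (simp add: inner_add_right)
    ultimately show ?thesis using Vhp[OF i] by (simp add: algebra_simps)
  qed
  have "fst (H i) \<bullet> w \<noteq> 0"
  proof
    assume z: "fst (H i) \<bullet> w = 0"
    have pL: "p \<in> L" using p by auto
    have pw: "p + w \<in> L" using w(2)[rule_format, of 1] by simp
    have "p \<in> fl H (insert i K')" "p + w \<in> fl H (insert i K')"
      using eq[OF pL] eq[OF pw] pL pw z by (auto simp: fl_insert hp_def)
    then have "p = p + w" using V[OF i] by auto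
    then show False using w(1) by simp
  qed
  then show ?thesis using eq by blast
qed

definition al :: "nat \<Rightarrow> real" where
  "al i = (SOME \<alpha>. \<alpha> \<noteq> 0 \<and> (\<forall>y\<in>L. fst (H i) \<bullet> y - snd (H i) = \<alpha> * (a \<bullet> y - a \<bullet> V i)))"

lemma al: "i \<in> {..<n} - K' \<Longrightarrow> al i \<noteq> 0 \<and> (\<forall>y\<in>L. fst (H i) \<bullet> y - snd (H i) = al i * (a \<bullet> y - a \<bullet> V i))"
  unfolding al_def by (rule someI_ex[OF affine_fun])

lemma t_inj: "inj_on (\<lambda>i. a \<bullet> V i) ({..<n} - K')"
proof (rule inj_onI)
  fix i j assume i: "i \<in> {..<n} - K'" and j: "j \<in> {..<n} - K'" and e: "a \<bullet> V i = a \<bullet> V j"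
  show "i = j"
  proof (rule ccontr)
    assume ij: "i \<noteq> j"
    have "V i = V j" using inj[OF VL[OF i] VL[OF j] e] .
    then have "V i \<in> fl H (insert i (insert j K'))" using V[OF i] V[OF j] by (auto simp: fl_insert)
    moreover have "fl H (insert i (insert j K')) = {}"
      using simple_empty[OF s, of "insert i (insert j K')"] i j ij K' fK' d1 by auto
    ultimately show False by simp
  qed
qed

lemma J0_ne: "{..<n} - K' \<noteq> {}"
proof
  assume "{..<n} - K' = {}"
  then have "{..<n} \<subseteq> K'" by auto
  then have "card {..<n} \<le> card K'" by (rule card_mono[OF fK'])
  then have "n \<le> card K'" by simp
  then show False using K'(2) nd d1 by linarith
qed

lemma sign_compare:
  assumes i: "i \<in> {..<n} - K'" and y1: "y1 \<in> L" and y2: "y2 \<in> L"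
  shows "(fst (H i) \<bullet> y1 - snd (H i)) * (fst (H i) \<bullet> y2 - snd (H i)) > 0 \<longleftrightarrow>
         (a \<bullet> y1 - a \<bullet> V i) * (a \<bullet> y2 - a \<bullet> V i) > 0"
proof -
  have e1: "fst (H i) \<bullet> y1 - snd (H i) = al i * (a \<bullet> y1 - a \<bullet> V i)" using al[OF i] y1 by blast
  have e2: "fst (H i) \<bullet> y2 - snd (H i) = al i * (a \<bullet> y2 - a \<bullet> V i)" using al[OF i] y2 by blast
  have "(fst (H i) \<bullet> y1 - snd (H i)) * (fst (H i) \<bullet> y2 - snd (H i)) = (al i * al i) * ((a \<bullet> y1 - a \<bullet> V i) * (a \<bullet> y2 - a \<bullet> V i))"
    unfolding e1 e2 by (simp add: ac_simps)
  moreover have "al i \<noteq> 0" using al[OF i] by blast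
  then have "al i * al i > 0" by (simp add: zero_less_mult_iff) linarith
  ultimately show ?thesis by (simp add: zero_less_mult_iff)
qed

end

lemma sok_same_sign: "sok G c I x \<Longrightarrow> sok G c I y \<Longrightarrow> i \<in> I \<Longrightarrow>
   (fst (G i) \<bullet> x - snd (G i)) * (fst (G i) \<bullet> y - snd (G i)) > 0"
  unfolding sok_def by (cases "i \<in> c") (auto intro: mult_pos_pos mult_neg_neg)




lemma sok_subset: "I' \<subseteq> I \<Longrightarrow> sok G c I x \<Longrightarrow> sok G c I' x"
  unfolding sok_def by blast

context line_setup begin

lemma sucK: "Suc (card K') = DIM('a)" using K'(2) d1 by linarith

lemma good_iff:
  assumes j: "j \<in> {..<n} - K'" and x0: "x0 \<in> L" "sok H b ({..<n} - K') x0"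
  shows "j \<in> goodset ({..<n} - K') (\<lambda>i. a \<bullet> V i) (a \<bullet> x0) \<longleftrightarrow> sok H b ({..<n} - insert j K') (V j)"
proof -
  have fin: "finite ({..<n} - insert j K')" by simp
  have x0': "sok H b ({..<n} - insert j K') x0" by (rule sok_subset[OF _ x0(2)]) auto
  have eqset: "({..<n} - K') - {j} = {..<n} - insert j K'" by auto
  have "(\<forall>i\<in>{..<n} - insert j K'. (a \<bullet> V j - a \<bullet> V i) * (a \<bullet> x0 - a \<bullet> V i) > 0) \<longleftrightarrow>
        (\<forall>i\<in>{..<n} - insert j K'. (fst (H i) \<bullet> V j - snd (H i)) * (fst (H i) \<bullet> x0 - snd (H i)) > 0)"
    using sign_compare[OF _ VL[OF j] x0(1)] by auto
  also have "\<dots> \<longleftrightarrow> sok H b ({..<n} - insert j K') (V j)"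
  proof
    assume "\<forall>i\<in>{..<n} - insert j K'. (fst (H i) \<bullet> V j - snd (H i)) * (fst (H i) \<bullet> x0 - snd (H i)) > 0"
    then show "sok H b ({..<n} - insert j K') (V j)" using sok_perturb[OF fin x0'] by blast
  next
    assume "sok H b ({..<n} - insert j K') (V j)"
    then show "\<forall>i\<in>{..<n} - insert j K'. (fst (H i) \<bullet> V j - snd (H i)) * (fst (H i) \<bullet> x0 - snd (H i)) > 0"
      using sok_same_sign[OF _ x0'] by blast
  qed
  finally show ?thesis using j unfolding goodset_def eqset by auto
qed

lemma boundary_set:
  assumes b: "b \<subseteq> {..<n}" and x0: "x0 \<in> L" "sok H b ({..<n} - K') x0"
  shows "{P \<in> cubes n DIM('a) (arr_class n H). cube K' b \<subseteq> P} =
         (\<lambda>j. cube (insert j K') b) ` goodset ({..<n} - K') (\<lambda>i. a \<bullet> V i) (a \<bullet> x0)"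
proof (intro equalityI subsetI)
  fix P assume P: "P \<in> {P \<in> cubes n DIM('a) (arr_class n H). cube K' b \<subseteq> P}"
  then obtain K b2 where K: "K \<subseteq> {..<n}" "card K = DIM('a)" "b2 \<subseteq> {..<n}" "P = cube K b2"
    and Parr: "P \<subseteq> sv UNIV {..<n} H" and QP: "cube K' b \<subseteq> P"
    by (auto simp: cubes_def is_cube_iff arr_sv)
  have KK: "K' \<subseteq> K" and bb: "b - K = b2 - K" using cube_sub[OF QP[unfolded K(4)]] by auto
  have fK: "finite K" using K(1) finite_subset by blast
  have "K' \<noteq> K" using K(2) sucK by auto
  then obtain j where jK: "j \<in> K" "j \<notin> K'" using KK by blast
  have "insert j K' \<subseteq> K" using jK KK by auto
  moreover have "card (insert j K') = card K" using jK fK' K(2) sucK by simp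
  ultimately have Kj: "K = insert j K'" using card_subset_eq[OF fK] by metis
  have j: "j \<in> {..<n} - K'" using jK K(1) by auto
  have Pc: "P = cube K b" using K(4) bb cube_minus[of K b] cube_minus[of K b2] by metis
  obtain x where x: "x \<in> fl H K" "sok H b2 ({..<n} - K) x"
    using cube_point[OF convex_UNIV _ K(1)] Parr K(4) by blast
  have "x = V j" using x(1) V[OF j] Kj by auto
  moreover have "b \<inter> ({..<n} - K) = b2 \<inter> ({..<n} - K)" using bb by blast
  ultimately have "sok H b ({..<n} - insert j K') (V j)" using x(2) Kj sok_Int by metis
  then have "j \<in> goodset ({..<n} - K') (\<lambda>i. a \<bullet> V i) (a \<bullet> x0)" using good_iff[OF j x0] by simp
  then show "P \<in> (\<lambda>j. cube (insert j K') b) ` goodset ({..<n} - K') (\<lambda>i. a \<bullet> V i) (a \<bullet> x0)"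
    using Pc Kj by blast
next
  fix P assume "P \<in> (\<lambda>j. cube (insert j K') b) ` goodset ({..<n} - K') (\<lambda>i. a \<bullet> V i) (a \<bullet> x0)"
  then obtain j where jg: "j \<in> goodset ({..<n} - K') (\<lambda>i. a \<bullet> V i) (a \<bullet> x0)" and P: "P = cube (insert j K') b"
    by blast
  have j: "j \<in> {..<n} - K'" using jg by (simp add: goodset_def)
  have sj: "sok H b ({..<n} - insert j K') (V j)" using good_iff[OF j x0] jg by simp
  have cK: "card (insert j K') = DIM('a)" using j fK' sucK by simp
  have Kn: "insert j K' \<subseteq> {..<n}" using j K'(1) by auto
  have "P \<subseteq> sv UNIV {..<n} H"
    unfolding P by (rule perturb_cube[OF affine_UNIV _ Kn simple_gp[OF s] _ _ _ sj b]) (use cK V[OF j] in auto)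
  moreover have "is_cube n DIM('a) P" unfolding is_cube_iff P using Kn cK b by blast
  moreover have "cube K' b \<subseteq> P" using P cube_mono[of j K' b] j by auto
  ultimately show "P \<in> {P \<in> cubes n DIM('a) (arr_class n H). cube K' b \<subseteq> P}"
    by (auto simp: cubes_def arr_sv)
qed

lemma boundary_card:
  assumes b: "b \<subseteq> {..<n}" and x0: "x0 \<in> L" "sok H b ({..<n} - K') x0"
  shows "card {P \<in> cubes n DIM('a) (arr_class n H). cube K' b \<subseteq> P} =
         card (goodset ({..<n} - K') (\<lambda>i. a \<bullet> V i) (a \<bullet> x0))"
proof -
  have "inj_on (\<lambda>j. cube (insert j K') b) (goodset ({..<n} - K') (\<lambda>i. a \<bullet> V i) (a \<bullet> x0))"
  proof (rule inj_onI)
    fix j1 j2 assume j1: "j1 \<in> goodset ({..<n} - K') (\<lambda>i. a \<bullet> V i) (a \<bullet> x0)"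
      and j2: "j2 \<in> goodset ({..<n} - K') (\<lambda>i. a \<bullet> V i) (a \<bullet> x0)"
      and e: "cube (insert j1 K') b = cube (insert j2 K') b"
    have "insert j1 K' = insert j2 K'" using cube_eqK[OF e] .
    moreover have "j1 \<notin> K'" "j2 \<notin> K'" using j1 j2 by (auto simp: goodset_def)
    ultimately show "j1 = j2" by (metis insertE insertI1)
  qed
  then show ?thesis unfolding boundary_set[OF b x0] by (rule card_image)
qed

lemma t0_notin:
  assumes x0: "x0 \<in> L" "sok H b ({..<n} - K') x0"
  shows "a \<bullet> x0 \<notin> (\<lambda>i. a \<bullet> V i) ` ({..<n} - K')"
proof
  assume "a \<bullet> x0 \<in> (\<lambda>i. a \<bullet> V i) ` ({..<n} - K')"
  then obtain i where i: "i \<in> {..<n} - K'" "a \<bullet> x0 = a \<bullet> V i" by blast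
  then have "x0 = V i" using inj[OF x0(1) VL[OF i(1)]] by simp
  then have "fst (H i) \<bullet> x0 = snd (H i)" using Vhp[OF i(1)] by simp
  then show False using sok_strict[OF x0(2)] i(1) by blast
qed

end




lemma d1: "DIM('a::euclidean_space) \<ge> 1" using DIM_positive by (simp add: Suc_le_eq)

lemma singleton_from_generic:
  fixes H :: "nat \<Rightarrow> 'a::euclidean_space ohp"
  assumes g: "generic_hyperplane n H (a, \<beta>)" and K': "K' \<subseteq> {..<n}" "card K' = DIM('a) - 1"
  shows "\<exists>p. fl H K' \<inter> {x. a \<bullet> x = \<beta>} = {p}"
proof -
  have "aff_dim (hp (a, \<beta>) \<inter> fl H K') = int (DIM('a) - 1) - int (card K')"
    using gpD1[OF generic_gp[OF g] K'(1)] K'(2) by simp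
  then have "aff_dim (hp (a, \<beta>) \<inter> fl H K') = 0" using K'(2) by simp
  then show ?thesis by (auto simp: aff_dim_eq_0 hp_pair Int_commute)
qed

lemma part2:
  fixes H :: "nat \<Rightarrow> 'a::euclidean_space ohp"
  assumes s: "simple_arrangement n H" and g: "generic_hyperplane n H (a, \<beta>)"
    and pos: "\<forall>K. K \<subseteq> {..<n} \<and> card K = DIM('a) \<longrightarrow> fl H K \<subseteq> pos_side (a, \<beta>)"
  shows "cubes n (DIM('a) - 1) (induced_class n H (a, \<beta>)) \<subseteq> boundary n DIM('a) (arr_class n H)"
proof
  fix Q assume Q: "Q \<in> cubes n (DIM('a) - 1) (induced_class n H (a, \<beta>))"
  then obtain K' b where K': "K' \<subseteq> {..<n}" "card K' = DIM('a) - 1" and b: "b \<subseteq> {..<n}"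
    and Qc: "Q = cube K' b" and Qsub: "Q \<subseteq> sv (hp (a, \<beta>)) {..<n} H"
    by (auto simp: cubes_def is_cube_iff ind_sv)
  obtain x0 where x0: "x0 \<in> hp (a, \<beta>)" "x0 \<in> fl H K'" "sok H b ({..<n} - K') x0"
    using cube_point[OF affine_imp_convex[OF affine_hp] _ K'(1)] Qsub Qc by blast
  obtain p where p: "fl H K' \<inter> {x. a \<bullet> x = \<beta>} = {p}" using singleton_from_generic[OF g K'] by blast
  interpret line_setup H n K' a \<beta> p using s K' p by unfold_locales
  have ax0: "a \<bullet> x0 = \<beta>" using x0(1) by (simp add: hp_pair)
  have "Q \<subseteq> arr_class n H" using Qsub part1[OF s g] Qc by (auto simp: ind_sv)
  then have Qc': "Q \<in> cubes n (DIM('a) - 1) (arr_class n H)" using Q by (auto simp: cubes_def)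
  have below: "\<forall>i\<in>{..<n} - K'. a \<bullet> x0 < a \<bullet> V i"
  proof
    fix i assume i: "i \<in> {..<n} - K'"
    have "card (insert i K') = DIM('a)" using i fK' sucK by simp
    moreover have "insert i K' \<subseteq> {..<n}" using i K'(1) by auto
    ultimately have "fl H (insert i K') \<subseteq> pos_side (a, \<beta>)" using pos by blast
    then show "a \<bullet> x0 < a \<bullet> V i" using V[OF i] ax0 by (auto simp: pos_side_def)
  qed
  have "card {P \<in> cubes n DIM('a) (arr_class n H). Q \<subseteq> P} = 1"
    unfolding Qc boundary_card[OF b x0(2,3)]
    by (rule goodset_below[OF _ J0_ne t_inj below]) simp
  then show "Q \<in> boundary n DIM('a) (arr_class n H)" using Qc' by (simp add: boundary_def)
qed

lemma hp_neg: "hp (- a, - \<beta>) = hp (a, \<beta>)"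
  by (auto simp: hp_def)

lemma induced_neg: "induced_class n H (- a, - \<beta>) = induced_class n H (a, \<beta>)"
  by (simp add: ind_sv hp_neg)

lemma generic_neg:
  assumes "generic_hyperplane n H (a, \<beta>)"
  shows "generic_hyperplane n H (- a, - \<beta>)"
proof -
  have e: "hp ((H(n := (- a, - \<beta>))) i) = hp ((H(n := (a, \<beta>))) i)" for i
    by (cases "i = n") (simp_all add: hp_neg)
  show ?thesis using assms unfolding generic_hyperplane_def e by simp
qed

lemma part2_neg:
  fixes H :: "nat \<Rightarrow> 'a::euclidean_space ohp"
  assumes s: "simple_arrangement n H" and g: "generic_hyperplane n H (a, \<beta>)"
    and neg: "\<forall>K. K \<subseteq> {..<n} \<and> card K = DIM('a) \<longrightarrow> fl H K \<subseteq> neg_side (a, \<beta>)"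
  shows "cubes n (DIM('a) - 1) (induced_class n H (a, \<beta>)) \<subseteq> boundary n DIM('a) (arr_class n H)"
proof -
  have "\<forall>K. K \<subseteq> {..<n} \<and> card K = DIM('a) \<longrightarrow> fl H K \<subseteq> pos_side (- a, - \<beta>)"
    using neg by (auto simp: pos_side_def neg_side_def)
  from part2[OF s generic_neg[OF g] this] show ?thesis by (simp add: induced_neg)
qed




lemma two_points:
  fixes S :: "'a::euclidean_space set"
  assumes "aff_dim S \<ge> 1"
  shows "\<exists>y1\<in>S. \<exists>y2\<in>S. y1 \<noteq> y2"
proof (rule ccontr)
  assume "\<not> ?thesis"
  then have "S = {} \<or> (\<exists>y. S = {y})" by blast
  then show False using assms by auto
qed

lemma exists_dir:
  fixes H :: "nat \<Rightarrow> 'a::euclidean_space ohp"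
  assumes s: "simple_arrangement n H"
  shows "\<exists>a. \<forall>M. M \<subseteq> {..<n} \<and> card M < DIM('a) \<longrightarrow> (\<exists>y1\<in>fl H M. \<exists>y2\<in>fl H M. a \<bullet> y1 \<noteq> a \<bullet> y2)"
proof -
  define \<M> where "\<M> = {M. M \<subseteq> {..<n} \<and> card M < DIM('a)}"
  have fM: "finite \<M>" unfolding \<M>_def by (rule finite_subset[of _ "Pow {..<n}"]) auto
  have "\<forall>M\<in>\<M>. \<exists>u. u \<noteq> 0 \<and> (\<exists>y1\<in>fl H M. \<exists>y2\<in>fl H M. u = y1 - y2)"
  proof
    fix M assume M: "M \<in> \<M>"
    have "aff_dim (fl H M) = int DIM('a) - int (card M)"
      using simple_dim[OF s] M by (auto simp: \<M>_def)
    then have "aff_dim (fl H M) \<ge> 1" using M by (auto simp: \<M>_def)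
    then obtain y1 y2 where "y1 \<in> fl H M" "y2 \<in> fl H M" "y1 \<noteq> y2" using two_points by blast
    then show "\<exists>u. u \<noteq> 0 \<and> (\<exists>y1\<in>fl H M. \<exists>y2\<in>fl H M. u = y1 - y2)" by (intro exI[of _ "y1 - y2"]) auto
  qed
  then obtain u where u: "\<forall>M\<in>\<M>. u M \<noteq> 0 \<and> (\<exists>y1\<in>fl H M. \<exists>y2\<in>fl H M. u M = y1 - y2)"
    by metis
  have "negligible (\<Union>((\<lambda>M. {x. u M \<bullet> x = 0}) ` \<M>))"
    by (rule negligible_Union) (use fM u in \<open>auto intro: negligible_hyperplane\<close>)
  then have "(\<Union>((\<lambda>M. {x. u M \<bullet> x = 0}) ` \<M>)) \<noteq> UNIV" using non_negligible_UNIV by metis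
  then obtain a where a: "\<forall>M\<in>\<M>. u M \<bullet> a \<noteq> 0" by blast
  show ?thesis
  proof (intro exI allI impI)
    fix M assume "M \<subseteq> {..<n} \<and> card M < DIM('a)"
    then have M: "M \<in> \<M>" by (simp add: \<M>_def)
    obtain y1 y2 where y: "y1 \<in> fl H M" "y2 \<in> fl H M" "u M = y1 - y2" using u M by blast
    have "u M \<bullet> a \<noteq> 0" using a M by blast
    then have "a \<bullet> (y1 - y2) \<noteq> 0" using y(3) by (simp add: inner_commute)
    then show "\<exists>y1\<in>fl H M. \<exists>y2\<in>fl H M. a \<bullet> y1 \<noteq> a \<bullet> y2" using y by (auto simp: inner_diff_right)
  qed
qed

lemma generic_of:
  fixes H :: "nat \<Rightarrow> 'a::euclidean_space ohp"
  assumes s: "simple_arrangement n H"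
    and dir: "\<forall>M. M \<subseteq> {..<n} \<and> card M < DIM('a) \<longrightarrow> (\<exists>y1\<in>fl H M. \<exists>y2\<in>fl H M. a \<bullet> y1 \<noteq> a \<bullet> y2)"
    and vert: "\<forall>K. K \<subseteq> {..<n} \<and> card K = DIM('a) \<longrightarrow> (\<forall>v\<in>fl H K. a \<bullet> v \<noteq> \<beta>)"
  shows "generic_hyperplane n H (a, \<beta>)"
  unfolding generic_hyperplane_def
proof (intro conjI allI impI)
  have dd: "DIM('a) \<ge> 1" by (rule d1)
  obtain y1 y2 where "a \<bullet> y1 \<noteq> a \<bullet> y2" using dir[rule_format, of "{}"] dd by auto
  then show "fst (a, \<beta>) \<noteq> 0" by auto
next
  fix K assume K: "K \<subseteq> {..<Suc n} \<and> card K \<le> DIM('a)"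
  have dd: "DIM('a) \<ge> 1" by (rule d1)
  define M where "M = K - {n}"
  have Mn: "M \<subseteq> {..<n}" using K by (auto simp: M_def)
  have fM: "finite M" using Mn finite_subset by blast
  show "aff_dim (\<Inter>i\<in>K. hp ((H(n := (a, \<beta>))) i)) = int DIM('a) - int (card K)"
  proof (cases "n \<in> K")
    case True
    then have KM: "K = insert n M" "n \<notin> M" by (auto simp: M_def)
    have cK: "card K = Suc (card M)" using KM fM by simp
    have cM: "card M < DIM('a)" using cK K by simp
    obtain y1 y2 where y: "y1 \<in> fl H M" "y2 \<in> fl H M" "a \<bullet> y1 \<noteq> a \<bullet> y2" using dir Mn cM by blast
    define t where "t = (\<beta> - a \<bullet> y1) / (a \<bullet> y2 - a \<bullet> y1)"
    have yt: "y1 + t *\<^sub>R (y2 - y1) \<in> fl H M" by (rule mem_affine_3_minus[OF affine_fl y(1) y(2) y(1)])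
    have tt: "t * (a \<bullet> y2 - a \<bullet> y1) = \<beta> - a \<bullet> y1" using y(3) by (simp add: t_def)
    have "a \<bullet> (y1 + t *\<^sub>R (y2 - y1)) = a \<bullet> y1 + t * (a \<bullet> y2 - a \<bullet> y1)"
      by (simp add: inner_add_right inner_diff_right algebra_simps)
    then have "a \<bullet> (y1 + t *\<^sub>R (y2 - y1)) = \<beta>" using tt by simp
    then have ne: "fl H M \<inter> {v. a \<bullet> v = \<beta>} \<noteq> {}" using yt by blast
    have nsub: "\<not> fl H M \<subseteq> {v. a \<bullet> v = \<beta>}" using y by auto
    have "aff_dim (fl H M \<inter> {x. a \<bullet> x = \<beta>}) = aff_dim (fl H M) - 1"
      using aff_dim_affine_Int_hyperplane[OF affine_fl, of H M a \<beta>] ne nsub by simp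
    also have "\<dots> = int DIM('a) - int (card M) - 1" using simple_dim[OF s Mn] cM by simp
    finally show ?thesis
      unfolding KM(1) upd_fl_ins[OF Mn] using cK by (simp add: hp_pair Int_commute KM(1)[symmetric])
  next
    case False
    have Kn: "K \<subseteq> {..<n}"
    proof
      fix x assume "x \<in> K"
      then have "x < Suc n" "x \<noteq> n" using K False by auto
      then show "x \<in> {..<n}" by simp
    qed
    show ?thesis unfolding upd_fl[OF Kn] using simple_dim[OF s Kn] K by simp
  qed
next
  fix K assume K: "K \<subseteq> {..<Suc n} \<and> card K = DIM('a) + 1"
  define M where "M = K - {n}"
  have Mn: "M \<subseteq> {..<n}" using K by (auto simp: M_def)
  have fM: "finite M" using Mn finite_subset by blast
  show "(\<Inter>i\<in>K. hp ((H(n := (a, \<beta>))) i)) = {}"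
  proof (cases "n \<in> K")
    case True
    then have KM: "K = insert n M" "n \<notin> M" by (auto simp: M_def)
    have "card M = DIM('a)" using K KM fM by simp
    then have "\<forall>v\<in>fl H M. a \<bullet> v \<noteq> \<beta>" using vert Mn by blast
    then show ?thesis unfolding KM(1) upd_fl_ins[OF Mn] by (auto simp: hp_pair)
  next
    case False
    have Kn: "K \<subseteq> {..<n}"
    proof
      fix x assume "x \<in> K"
      then have "x < Suc n" "x \<noteq> n" using K False by auto
      then show "x \<in> {..<n}" by simp
    qed
    show ?thesis unfolding upd_fl[OF Kn] using simple_empty[OF s Kn] K by simp
  qed
qed




lemma exists_pair:
  fixes H :: "nat \<Rightarrow> 'a::euclidean_space ohp"
  assumes s: "simple_arrangement n H"
  shows "\<exists>a \<beta>1 \<beta>2. generic_hyperplane n H (a, \<beta>1) \<and> generic_hyperplane n H (a, \<beta>2) \<and>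
     (\<forall>K. K \<subseteq> {..<n} \<and> card K = DIM('a) \<longrightarrow> (\<forall>v\<in>fl H K. \<beta>1 < a \<bullet> v \<and> a \<bullet> v < \<beta>2))"
proof -
  obtain a where dir: "\<forall>M. M \<subseteq> {..<n} \<and> card M < DIM('a) \<longrightarrow> (\<exists>y1\<in>fl H M. \<exists>y2\<in>fl H M. a \<bullet> y1 \<noteq> a \<bullet> y2)"
    using exists_dir[OF s] by blast
  define \<K> where "\<K> = {K. K \<subseteq> {..<n} \<and> card K = DIM('a)}"
  define Vs where "Vs = \<Union>((\<lambda>K. fl H K) ` \<K>)"
  have fK: "finite \<K>" unfolding \<K>_def by (rule finite_subset[of _ "Pow {..<n}"]) auto
  have fV: "finite Vs" unfolding Vs_def
  proof (rule finite_Union)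
    show "finite ((\<lambda>K. fl H K) ` \<K>)" using fK by simp
    fix X assume "X \<in> (\<lambda>K. fl H K) ` \<K>"
    then obtain K where K: "K \<in> \<K>" "X = fl H K" by blast
    then obtain v where "fl H K = {v}" using simple_vertex[OF s, of K] by (auto simp: \<K>_def)
    then show "finite X" using K by simp
  qed
  have nd: "DIM('a) \<le> n" using s by (simp add: simple_arrangement_def)
  have "{..<DIM('a)} \<in> \<K>" using nd by (auto simp: \<K>_def)
  then obtain v0 where "fl H {..<DIM('a)} = {v0}" using simple_vertex[OF s, of "{..<DIM('a)}"] nd by (auto simp: \<K>_def)
  then have neV: "Vs \<noteq> {}" using \<open>{..<DIM('a)} \<in> \<K>\<close> by (auto simp: Vs_def)
  define TV where "TV = (\<lambda>v. a \<bullet> v) ` Vs"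
  have fT: "finite TV" "TV \<noteq> {}" using fV neV by (auto simp: TV_def)
  define \<beta>1 where "\<beta>1 = Min TV - 1"
  define \<beta>2 where "\<beta>2 = Max TV + 1"
  have bnd: "\<beta>1 < a \<bullet> v \<and> a \<bullet> v < \<beta>2" if "K \<subseteq> {..<n} \<and> card K = DIM('a)" "v \<in> fl H K" for K v
  proof -
    have "a \<bullet> v \<in> TV" using that by (auto simp: TV_def Vs_def \<K>_def)
    then have "Min TV \<le> a \<bullet> v" "a \<bullet> v \<le> Max TV" using fT by auto
    then show ?thesis by (simp add: \<beta>1_def \<beta>2_def)
  qed
  have g1: "generic_hyperplane n H (a, \<beta>1)"
  proof (rule generic_of[OF s dir], intro allI impI ballI)
    fix K v assume "K \<subseteq> {..<n} \<and> card K = DIM('a)" "v \<in> fl H K"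
    then show "a \<bullet> v \<noteq> \<beta>1" using bnd[of K v] by simp
  qed
  have g2: "generic_hyperplane n H (a, \<beta>2)"
  proof (rule generic_of[OF s dir], intro allI impI ballI)
    fix K v assume "K \<subseteq> {..<n} \<and> card K = DIM('a)" "v \<in> fl H K"
    then show "a \<bullet> v \<noteq> \<beta>2" using bnd[of K v] by simp
  qed
  show ?thesis using g1 g2 bnd by blast
qed

lemma part3:
  fixes H :: "nat \<Rightarrow> 'a::euclidean_space ohp"
  assumes s: "simple_arrangement n H"
  shows "\<exists>C1 C2. C1 \<subseteq> arr_class n H \<and> C2 \<subseteq> arr_class n H
                   \<and> maximum_class n (DIM('a) - 1) C1 \<and> maximum_class n (DIM('a) - 1) C2
                   \<and> boundary n DIM('a) (arr_class n H) =
                       cubes n (DIM('a) - 1) C1 \<union> cubes n (DIM('a) - 1) C2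
                   \<and> cubes n (DIM('a) - 1) C1 \<inter> cubes n (DIM('a) - 1) C2 = {}"
proof -
  obtain a \<beta>1 \<beta>2 where g1: "generic_hyperplane n H (a, \<beta>1)" and g2: "generic_hyperplane n H (a, \<beta>2)"
    and bnd: "\<forall>K. K \<subseteq> {..<n} \<and> card K = DIM('a) \<longrightarrow> (\<forall>v\<in>fl H K. \<beta>1 < a \<bullet> v \<and> a \<bullet> v < \<beta>2)"
    using exists_pair[OF s] by blast
  define C1 where "C1 = induced_class n H (a, \<beta>1)"
  define C2 where "C2 = induced_class n H (a, \<beta>2)"
  have pos1: "\<forall>K. K \<subseteq> {..<n} \<and> card K = DIM('a) \<longrightarrow> fl H K \<subseteq> pos_side (a, \<beta>1)"
    using bnd by (auto simp: pos_side_def)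
  have neg2: "\<forall>K. K \<subseteq> {..<n} \<and> card K = DIM('a) \<longrightarrow> fl H K \<subseteq> neg_side (a, \<beta>2)"
    using bnd by (auto simp: neg_side_def)
  have sub1: "cubes n (DIM('a) - 1) C1 \<subseteq> boundary n DIM('a) (arr_class n H)"
    unfolding C1_def by (rule part2[OF s g1 pos1])
  have sub2: "cubes n (DIM('a) - 1) C2 \<subseteq> boundary n DIM('a) (arr_class n H)"
    unfolding C2_def by (rule part2_neg[OF s g2 neg2])
  have vb: "\<beta>1 < a \<bullet> line_setup.V H K' i \<and> a \<bullet> line_setup.V H K' i < \<beta>2"
    if ls: "line_setup H n K' a \<beta>1 p" and i: "i \<in> {..<n} - K'" for K' p i
  proof -
    interpret line_setup H n K' a \<beta>1 p by (rule ls)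
    have "card (insert i K') = DIM('a)" using i fK' sucK by simp
    moreover have "insert i K' \<subseteq> {..<n}" using i K'(1) by auto
    ultimately show ?thesis using bnd V[OF i] by blast
  qed
  have "boundary n DIM('a) (arr_class n H) \<subseteq> cubes n (DIM('a) - 1) C1 \<union> cubes n (DIM('a) - 1) C2"
  proof
    fix Q assume Q: "Q \<in> boundary n DIM('a) (arr_class n H)"
    then have Qc: "Q \<in> cubes n (DIM('a) - 1) (arr_class n H)"
      and one: "card {P \<in> cubes n DIM('a) (arr_class n H). Q \<subseteq> P} = 1"
      by (auto simp: boundary_def)
    then obtain K' b where K': "K' \<subseteq> {..<n}" "card K' = DIM('a) - 1" and b: "b \<subseteq> {..<n}"
      and Qe: "Q = cube K' b" and Qsub: "Q \<subseteq> sv UNIV {..<n} H"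
      by (auto simp: cubes_def is_cube_iff arr_sv)
    obtain x0 where x0: "x0 \<in> fl H K'" "sok H b ({..<n} - K') x0"
      using cube_point[OF convex_UNIV _ K'(1)] Qsub Qe by blast
    obtain p where p: "fl H K' \<inter> {x. a \<bullet> x = \<beta>1} = {p}" using singleton_from_generic[OF g1 K'] by blast
    have ls: "line_setup H n K' a \<beta>1 p" using s K' p by unfold_locales
    interpret line_setup H n K' a \<beta>1 p by (rule ls)
    have "card (goodset ({..<n} - K') (\<lambda>i. a \<bullet> V i) (a \<bullet> x0)) = 1"
      using one boundary_card[OF b x0] Qe by simp
    then have cases: "(\<forall>i\<in>{..<n} - K'. a \<bullet> x0 < a \<bullet> V i) \<or> (\<forall>i\<in>{..<n} - K'. a \<bullet> x0 > a \<bullet> V i)"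
      using goodset_one[OF _ t_inj t0_notin[OF x0]] by simp
    have fin: "finite ({..<n} - K')" by simp
    have cK': "card K' \<le> DIM('a) - 1" using K'(2) by simp
    show "Q \<in> cubes n (DIM('a) - 1) C1 \<union> cubes n (DIM('a) - 1) C2"
      using cases
    proof
      assume below: "\<forall>i\<in>{..<n} - K'. a \<bullet> x0 < a \<bullet> V i"
      obtain p1 where p1: "p1 \<in> L" "a \<bullet> p1 = \<beta>1" using surj by blast
      have "\<forall>i\<in>{..<n} - K'. (fst (H i) \<bullet> p1 - snd (H i)) * (fst (H i) \<bullet> x0 - snd (H i)) > 0"
      proof
        fix i assume i: "i \<in> {..<n} - K'"
        have "(a \<bullet> p1 - a \<bullet> V i) * (a \<bullet> x0 - a \<bullet> V i) > 0"
          using vb[OF ls i] below i p1(2) by (intro mult_neg_neg) auto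
        then show "(fst (H i) \<bullet> p1 - snd (H i)) * (fst (H i) \<bullet> x0 - snd (H i)) > 0"
          using sign_compare[OF i p1(1) x0(1)] by simp
      qed
      then have sp: "sok H b ({..<n} - K') p1" using sok_perturb[OF fin x0(2)] by blast
      have "cube K' b \<subseteq> sv (hp (a, \<beta>1)) {..<n} H"
        by (rule perturb_cube[OF affine_hp _ K'(1) generic_gp[OF g1] cK' _ p1(1) sp b])
           (use p1 in \<open>auto simp: hp_pair\<close>)
      then have "Q \<in> cubes n (DIM('a) - 1) C1"
        using Qe K' b by (auto simp: cubes_def is_cube_iff C1_def ind_sv)
      then show ?thesis by blast
    next
      assume above: "\<forall>i\<in>{..<n} - K'. a \<bullet> x0 > a \<bullet> V i"
      obtain p2 where p2: "p2 \<in> L" "a \<bullet> p2 = \<beta>2" using surj by blast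
      have "\<forall>i\<in>{..<n} - K'. (fst (H i) \<bullet> p2 - snd (H i)) * (fst (H i) \<bullet> x0 - snd (H i)) > 0"
      proof
        fix i assume i: "i \<in> {..<n} - K'"
        have "(a \<bullet> p2 - a \<bullet> V i) * (a \<bullet> x0 - a \<bullet> V i) > 0"
          using vb[OF ls i] above i p2(2) by (intro mult_pos_pos) auto
        then show "(fst (H i) \<bullet> p2 - snd (H i)) * (fst (H i) \<bullet> x0 - snd (H i)) > 0"
          using sign_compare[OF i p2(1) x0(1)] by simp
      qed
      then have sp: "sok H b ({..<n} - K') p2" using sok_perturb[OF fin x0(2)] by blast
      have "cube K' b \<subseteq> sv (hp (a, \<beta>2)) {..<n} H"
        by (rule perturb_cube[OF affine_hp _ K'(1) generic_gp[OF g2] cK' _ p2(1) sp b])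
           (use p2 in \<open>auto simp: hp_pair\<close>)
      then have "Q \<in> cubes n (DIM('a) - 1) C2"
        using Qe K' b by (auto simp: cubes_def is_cube_iff C2_def ind_sv)
      then show ?thesis by blast
    qed
  qed
  then have beq: "boundary n DIM('a) (arr_class n H) = cubes n (DIM('a) - 1) C1 \<union> cubes n (DIM('a) - 1) C2"
    using sub1 sub2 by blast
  have disj: "cubes n (DIM('a) - 1) C1 \<inter> cubes n (DIM('a) - 1) C2 = {}"
  proof (rule ccontr)
    assume "cubes n (DIM('a) - 1) C1 \<inter> cubes n (DIM('a) - 1) C2 \<noteq> {}"
    then obtain Q where Q1: "Q \<in> cubes n (DIM('a) - 1) C1" and Q2: "Q \<in> cubes n (DIM('a) - 1) C2" by blast
    then obtain K' b where K': "K' \<subseteq> {..<n}" "card K' = DIM('a) - 1" and b: "b \<subseteq> {..<n}"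
      and Qe: "Q = cube K' b" by (auto simp: cubes_def is_cube_iff)
    have S1: "cube K' b \<subseteq> sv (hp (a, \<beta>1)) {..<n} H" using Q1 Qe by (auto simp: cubes_def C1_def ind_sv)
    have S2: "cube K' b \<subseteq> sv (hp (a, \<beta>2)) {..<n} H" using Q2 Qe by (auto simp: cubes_def C2_def ind_sv)
    obtain y1 where y1: "y1 \<in> hp (a, \<beta>1)" "y1 \<in> fl H K'" "sok H b ({..<n} - K') y1"
      using cube_point[OF affine_imp_convex[OF affine_hp] _ K'(1) S1] by blast
    obtain y2 where y2: "y2 \<in> hp (a, \<beta>2)" "y2 \<in> fl H K'" "sok H b ({..<n} - K') y2"
      using cube_point[OF affine_imp_convex[OF affine_hp] _ K'(1) S2] by blast
    obtain p where p: "fl H K' \<inter> {x. a \<bullet> x = \<beta>1} = {p}" using singleton_from_generic[OF g1 K'] by blast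
    have ls: "line_setup H n K' a \<beta>1 p" using s K' p by unfold_locales
    interpret line_setup H n K' a \<beta>1 p by (rule ls)
    obtain i where i: "i \<in> {..<n} - K'" using J0_ne by blast
    have "(fst (H i) \<bullet> y1 - snd (H i)) * (fst (H i) \<bullet> y2 - snd (H i)) > 0"
      using sok_same_sign[OF y1(3) y2(3) i] .
    then have pos: "(a \<bullet> y1 - a \<bullet> V i) * (a \<bullet> y2 - a \<bullet> V i) > 0"
      using sign_compare[OF i y1(2) y2(2)] by simp
    have "a \<bullet> y1 = \<beta>1" "a \<bullet> y2 = \<beta>2" using y1(1) y2(1) by (auto simp: hp_pair)
    then have "(a \<bullet> y1 - a \<bullet> V i) * (a \<bullet> y2 - a \<bullet> V i) < 0"
      using vb[OF ls i] by (intro mult_neg_pos) auto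
    then show False using pos by simp
  qed
  show ?thesis
    apply (rule exI[of _ C1], rule exI[of _ C2])
    using part1[OF s g1] part1[OF s g2] beq disj by (simp add: C1_def C2_def)
qed

theorem corollary1:
  fixes H :: "nat \<Rightarrow> 'a::euclidean_space \<times> real" and h :: "'a \<times> real" and n :: nat
  assumes "simple_arrangement n H"
    and "generic_hyperplane n H h"
  shows "maximum_class n (DIM('a) - 1) (induced_class n H h)
         \<and> induced_class n H h \<subseteq> arr_class n H
         \<and> ((\<forall>K. K \<subseteq> {..<n} \<and> card K = DIM('a) \<longrightarrow> (\<Inter>i\<in>K. hp (H i)) \<subseteq> pos_side h) \<or>
            (\<forall>K. K \<subseteq> {..<n} \<and> card K = DIM('a) \<longrightarrow> (\<Inter>i\<in>K. hp (H i)) \<subseteq> neg_side h)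
            \<longrightarrow> cubes n (DIM('a) - 1) (induced_class n H h) \<subseteq> boundary n DIM('a) (arr_class n H)
              \<and> (\<exists>C1 C2. C1 \<subseteq> arr_class n H \<and> C2 \<subseteq> arr_class n H
                   \<and> maximum_class n (DIM('a) - 1) C1 \<and> maximum_class n (DIM('a) - 1) C2
                   \<and> boundary n DIM('a) (arr_class n H) =
                       cubes n (DIM('a) - 1) C1 \<union> cubes n (DIM('a) - 1) C2
                   \<and> cubes n (DIM('a) - 1) C1 \<inter> cubes n (DIM('a) - 1) C2 = {}))"
proof -
  obtain a \<beta> where h: "h = (a, \<beta>)" by (cases h)
  have s: "simple_arrangement n H" and g: "generic_hyperplane n H (a, \<beta>)" using assms h by auto
  have P1: "maximum_class n (DIM('a) - 1) (induced_class n H h) \<and> induced_class n H h \<subseteq> arr_class n H"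
    using part1[OF assms] .
  have P2: "cubes n (DIM('a) - 1) (induced_class n H h) \<subseteq> boundary n DIM('a) (arr_class n H)"
    if hyp0: "(\<forall>K. K \<subseteq> {..<n} \<and> card K = DIM('a) \<longrightarrow> (\<Inter>i\<in>K. hp (H i)) \<subseteq> pos_side h) \<or>
            (\<forall>K. K \<subseteq> {..<n} \<and> card K = DIM('a) \<longrightarrow> (\<Inter>i\<in>K. hp (H i)) \<subseteq> neg_side h)"
    using hyp0
  proof
    assume "\<forall>K. K \<subseteq> {..<n} \<and> card K = DIM('a) \<longrightarrow> (\<Inter>i\<in>K. hp (H i)) \<subseteq> pos_side h"
    then have "\<forall>K. K \<subseteq> {..<n} \<and> card K = DIM('a) \<longrightarrow> fl H K \<subseteq> pos_side (a, \<beta>)" by (simp add: fl_def h)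
    then show ?thesis using part2[OF s g] h by simp
  next
    assume "\<forall>K. K \<subseteq> {..<n} \<and> card K = DIM('a) \<longrightarrow> (\<Inter>i\<in>K. hp (H i)) \<subseteq> neg_side h"
    then have "\<forall>K. K \<subseteq> {..<n} \<and> card K = DIM('a) \<longrightarrow> fl H K \<subseteq> neg_side (a, \<beta>)" by (simp add: fl_def h)
    then show ?thesis using part2_neg[OF s g] h by simp
  qed
  have P3: "(\<forall>K. K \<subseteq> {..<n} \<and> card K = DIM('a) \<longrightarrow> (\<Inter>i\<in>K. hp (H i)) \<subseteq> pos_side h) \<or>
            (\<forall>K. K \<subseteq> {..<n} \<and> card K = DIM('a) \<longrightarrow> (\<Inter>i\<in>K. hp (H i)) \<subseteq> neg_side h)
            \<longrightarrow> cubes n (DIM('a) - 1) (induced_class n H h) \<subseteq> boundary n DIM('a) (arr_class n H)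
              \<and> (\<exists>C1 C2. C1 \<subseteq> arr_class n H \<and> C2 \<subseteq> arr_class n H
                   \<and> maximum_class n (DIM('a) - 1) C1 \<and> maximum_class n (DIM('a) - 1) C2
                   \<and> boundary n DIM('a) (arr_class n H) =
                       cubes n (DIM('a) - 1) C1 \<union> cubes n (DIM('a) - 1) C2
                   \<and> cubes n (DIM('a) - 1) C1 \<inter> cubes n (DIM('a) - 1) C2 = {})"
  proof (rule impI)
    assume hyp: "(\<forall>K. K \<subseteq> {..<n} \<and> card K = DIM('a) \<longrightarrow> (\<Inter>i\<in>K. hp (H i)) \<subseteq> pos_side h) \<or>
            (\<forall>K. K \<subseteq> {..<n} \<and> card K = DIM('a) \<longrightarrow> (\<Inter>i\<in>K. hp (H i)) \<subseteq> neg_side h)"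
    show "cubes n (DIM('a) - 1) (induced_class n H h) \<subseteq> boundary n DIM('a) (arr_class n H)
              \<and> (\<exists>C1 C2. C1 \<subseteq> arr_class n H \<and> C2 \<subseteq> arr_class n H
                   \<and> maximum_class n (DIM('a) - 1) C1 \<and> maximum_class n (DIM('a) - 1) C2
                   \<and> boundary n DIM('a) (arr_class n H) =
                       cubes n (DIM('a) - 1) C1 \<union> cubes n (DIM('a) - 1) C2
                   \<and> cubes n (DIM('a) - 1) C1 \<inter> cubes n (DIM('a) - 1) C2 = {})"
      by (rule conjI[OF P2[OF hyp] part3[OF s]])
  qed
  show ?thesis by (rule conjI[OF conjunct1[OF P1] conjI[OF conjunct2[OF P1] P3]])
qed



end
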